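(* Let $q \geq 7$ be a prime power and let $\mathcal{X}$ be a plane curve of degree $q-1$ defined over $\mathbb{F}_q$ without $\mathbb{F}_q$-linear components with $\mathrm{N}_q(\mathcal{X}) = (q-1)^2$. If there is an $\mathbb{F}_q$-line $l^1_\infty$ with $l^1_\infty(\mathbb{F}_q) \subseteq Z(\mathcal{X})$, then $a_0 = 3$.
   Context: $\mathcal{X}(\mathbb{F}_q)=\mathcal{X}\cap\mathbb{P}^2(\mathbb{F}_q)$, $\mathrm{N}_q(\mathcal{X})=\#\mathcal{X}(\mathbb{F}_q)$; "without $\mathbb{F}_q$-linear components" means no line defined over $\mathbb{F}_q$ is a component. $Z(\mathcal{X}) := \mathbb{P}^2(\mathbb{F}_q)\setminus\mathcal{X}(\mathbb{F}_q)$. $a_0$ is the number of $\mathbb{F}_q$-lines containing no point of $\mathcal{X}(\mathbb{F}_q)$. *)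

theory Defs
  imports Main
begin

(* Homogeneous polynomials in X,Y,Z over a field, as coefficient functions on exponent triples *)
type_synonym 'a tpoly = "nat \<times> nat \<times> nat \<Rightarrow> 'a"

definition homog :: "nat \<Rightarrow> ('a::zero) tpoly \<Rightarrow> bool" where
  "homog d F \<longleftrightarrow> (\<forall>i j k. F (i,j,k) \<noteq> 0 \<longrightarrow> i + j + k = d) \<and> (\<exists>m. F m \<noteq> 0)"

definition heval :: "nat \<Rightarrow> ('a::comm_ring_1) tpoly \<Rightarrow> 'a \<times> 'a \<times> 'a \<Rightarrow> 'a" where
  "heval d F v = (case v of (x,y,z) \<Rightarrow>
     (\<Sum>i\<le>d. \<Sum>j\<le>d-i. F (i,j,d-i-j) * x^i * y^j * z^(d-i-j)))"

(* product of the linear form aX+bY+cZ with G *)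
definition lin_mult :: "('a::comm_ring_1) \<times> 'a \<times> 'a \<Rightarrow> 'a tpoly \<Rightarrow> 'a tpoly" where
  "lin_mult l G = (case l of (a,b,c) \<Rightarrow> (\<lambda>(i,j,k).
      (if i > 0 then a * G (i-1,j,k) else 0) + (if j > 0 then b * G (i,j-1,k) else 0)
    + (if k > 0 then c * G (i,j,k-1) else 0)))"

definition no_linear_component :: "nat \<Rightarrow> ('a::comm_ring_1) tpoly \<Rightarrow> bool" where
  "no_linear_component d F \<longleftrightarrow>
     \<not> (\<exists>l G. l \<noteq> (0,0,0) \<and> homog (d-1) G \<and> F = lin_mult l G)"

definition proj_class :: "('a::field) \<times> 'a \<times> 'a \<Rightarrow> ('a \<times> 'a \<times> 'a) set" where
  "proj_class v = (case v of (x,y,z) \<Rightarrow> {(c*x, c*y, c*z) | c. c \<noteq> 0})"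

definition proj_pts :: "(('a::field) \<times> 'a \<times> 'a) set set" where
  "proj_pts = {proj_class v | v. v \<noteq> (0,0,0)}"

definition curve_pts :: "nat \<Rightarrow> ('a::field) tpoly \<Rightarrow> ('a \<times> 'a \<times> 'a) set set" where
  "curve_pts d F = {P \<in> proj_pts. \<forall>v\<in>P. heval d F v = 0}"

definition Zset :: "nat \<Rightarrow> ('a::field) tpoly \<Rightarrow> ('a \<times> 'a \<times> 'a) set set" where
  "Zset d F = proj_pts - curve_pts d F"

definition line_pts :: "('a::field) \<times> 'a \<times> 'a \<Rightarrow> ('a \<times> 'a \<times> 'a) set set" where
  "line_pts l = (case l of (a,b,c) \<Rightarrow>
     {P \<in> proj_pts. \<forall>(x,y,z)\<in>P. a*x + b*y + c*z = 0})"

(* the F_q-lines, each identified with its set of F_q-points *)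
definition fq_lines :: "(('a::field) \<times> 'a \<times> 'a) set set set" where
  "fq_lines = {line_pts l | l. l \<noteq> (0,0,0)}"

definition a0 :: "nat \<Rightarrow> ('a::field) tpoly \<Rightarrow> nat" where
  "a0 d F = card {L \<in> fq_lines. L \<inter> curve_pts d F = {}}"

end

theory Submission
  imports Defs "HOL-Computational_Algebra.Polynomial"
begin

lemma ff_card_ge2: "card (UNIV :: ('a::{finite,field}) set) \<ge> 2"
proof -
  have "{0::'a, 1} \<subseteq> UNIV" by simp
  hence "card {0::'a,1} \<le> card (UNIV::'a set)" by (intro card_mono) auto
  thus ?thesis by simp
qed

lemma ff_fermat:
  fixes x :: "'a::{finite,field}"
  assumes "x \<noteq> 0"
  shows "x ^ (card (UNIV::'a set) - 1) = 1"
proof -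
  let ?U = "UNIV - {0::'a}"
  have cU: "card ?U = card (UNIV::'a set) - 1" by (simp add: card_Diff_subset)
  have inj: "inj_on (\<lambda>y. x * y) ?U" using assms by (auto simp: inj_on_def)
  have im: "(\<lambda>y. x * y) ` ?U = ?U"
  proof
    show "(\<lambda>y. x * y) ` ?U \<subseteq> ?U" using assms by auto
    show "?U \<subseteq> (\<lambda>y. x * y) ` ?U"
    proof
      fix z assume "z \<in> ?U"
      hence "z = x * (z / x)" "z / x \<in> ?U" using assms by auto
      thus "z \<in> (\<lambda>y. x * y) ` ?U" by blast
    qed
  qed
  have "(\<Prod>y\<in>?U. y) = (\<Prod>y\<in>(\<lambda>y. x * y) ` ?U. y)" by (simp add: im)
  also have "\<dots> = (\<Prod>y\<in>?U. x * y)" using prod.reindex[OF inj] by simp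
  also have "\<dots> = x ^ card ?U * (\<Prod>y\<in>?U. y)" by (simp add: prod.distrib)
  finally have "(\<Prod>y\<in>?U. y) * (x ^ card ?U - 1) = 0" by (simp add: algebra_simps)
  moreover have "(\<Prod>y\<in>?U. y) \<noteq> 0" by (simp add: prod_zero_iff)
  ultimately show ?thesis using cU by simp
qed

lemma ff_char: "of_nat (card (UNIV :: ('a::{finite,field}) set)) = (0::'a)"
proof -
  have inj: "inj (\<lambda>y::'a. y + 1)" by (auto simp: inj_on_def)
  have im: "range (\<lambda>y::'a. y + 1) = UNIV"
    by (metis diff_add_cancel surj_def)
  have "(\<Sum>y\<in>UNIV. y) = (\<Sum>y\<in>range (\<lambda>y::'a. y + 1). y)" by (simp add: im)
  also have "\<dots> = (\<Sum>y\<in>UNIV. y + (1::'a))" using sum.reindex[OF inj] by simp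
  also have "\<dots> = (\<Sum>y\<in>UNIV. y) + of_nat (card (UNIV::'a set))" by (simp add: sum.distrib)
  finally show ?thesis by simp
qed

lemma ff_pow_q: "(x::'a::{finite,field}) ^ card (UNIV::'a set) = x"
proof (cases "x = 0")
  case True thus ?thesis using ff_card_ge2[where 'a='a] by (simp add: power_0_left)
next
  case False
  have "card (UNIV::'a set) = Suc (card (UNIV::'a set) - 1)" using ff_card_ge2[where 'a='a] by simp
  hence "x ^ card (UNIV::'a set) = x * x ^ (card (UNIV::'a set) - 1)" by (metis power_Suc)
  thus ?thesis using ff_fermat[OF False] by simp
qed

lemma ff_exists_nonroot:
  fixes i :: nat
  assumes "0 < i" "i < card (UNIV :: ('a::{finite,field}) set) - 1"
  shows "\<exists>c::'a. c \<noteq> 0 \<and> c ^ i \<noteq> 1"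
proof (rule ccontr)
  assume "\<not> ?thesis"
  hence H: "\<And>c::'a. c \<noteq> 0 \<Longrightarrow> c ^ i = 1" by blast
  let ?p = "monom (1::'a) i - 1"
  have dp: "degree ?p \<le> i" by (intro degree_diff_le) (auto simp: degree_monom_le)
  have "coeff ?p i = 1" using assms by simp
  hence "?p \<noteq> 0" by (metis coeff_0 zero_neq_one)
  hence "card {x. poly ?p x = 0} \<le> i" using card_poly_roots_bound[of ?p] dp by simp
  moreover have "UNIV - {0::'a} \<subseteq> {x. poly ?p x = 0}" using H by (auto simp: poly_monom)
  hence "card (UNIV - {0::'a}) \<le> card {x. poly ?p x = 0}" by (intro card_mono) auto
  ultimately show False using assms by (simp add: card_Diff_subset)
qed

lemma ff_sum_pow:
  assumes "i < card (UNIV :: ('a::{finite,field}) set) - 1"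
  shows "(\<Sum>x\<in>UNIV. (x::'a) ^ i) = 0"
proof (cases "i = 0")
  case True thus ?thesis using ff_char[where 'a='a] by simp
next
  case False
  then obtain c :: 'a where c: "c \<noteq> 0" "c ^ i \<noteq> 1" using ff_exists_nonroot assms by blast
  have inj: "inj (\<lambda>y::'a. c * y)" using c by (auto simp: inj_on_def)
  have im: "range (\<lambda>y::'a. c * y) = UNIV"
  proof -
    have "\<And>z. z = c * (z / c)" using c by auto
    thus ?thesis by (metis surj_def)
  qed
  have "(\<Sum>x\<in>UNIV. (x::'a) ^ i) = (\<Sum>x\<in>range (\<lambda>y::'a. c * y). x ^ i)" by (simp add: im)
  also have "\<dots> = (\<Sum>x\<in>UNIV. (c * x) ^ i)" using sum.reindex[OF inj] by simp
  also have "\<dots> = c ^ i * (\<Sum>x\<in>UNIV. x ^ i)" by (simp add: power_mult_distrib sum_distrib_left)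
  finally have "(c ^ i - 1) * (\<Sum>x\<in>UNIV. (x::'a) ^ i) = 0" by (simp add: algebra_simps)
  thus ?thesis using c by simp
qed

lemma ff_sum_pow_qm1: "(\<Sum>x\<in>UNIV. (x::'a::{finite,field}) ^ (card (UNIV::'a set) - 1)) = -1"
proof -
  have e: "\<And>x::'a. x ^ (card (UNIV::'a set) - 1) = (if x = 0 then 0 else 1)"
  proof -
    fix x :: 'a
    show "x ^ (card (UNIV::'a set) - 1) = (if x = 0 then 0 else 1)"
      using ff_fermat[of x] ff_card_ge2[where 'a='a] by (cases "x = 0") (auto simp: power_0_left)
  qed
  have "(\<Sum>x\<in>UNIV. (x::'a) ^ (card (UNIV::'a set) - 1)) = (\<Sum>x::'a\<in>UNIV. if x = 0 then 0 else (1::'a))"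
    by (simp only: e)
  also have "\<dots> = of_nat (card (UNIV - {0::'a}))"
    by (simp add: sum.If_cases Diff_eq Compl_eq)
  also have "\<dots> = of_nat (card (UNIV::'a set) - 1)" by (simp add: card_Diff_subset)
  also have "\<dots> = of_nat (card (UNIV::'a set)) - 1" using ff_card_ge2[where 'a='a] by (simp add: of_nat_diff)
  finally show ?thesis using ff_char[where 'a='a] by simp
qed

type_synonym 'a v3 = "'a \<times> 'a \<times> 'a"

definition lf :: "('a::comm_ring_1) v3 \<Rightarrow> 'a v3 \<Rightarrow> 'a" where
  "lf l v = (case l of (a,b,c) \<Rightarrow> case v of (x,y,z) \<Rightarrow> a*x + b*y + c*z)"

lemma lf_simp[simp]: "lf (a,b,c) (x,y,z) = a*x + b*y + c*z" by (simp add: lf_def)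

inductive_set PF :: "nat \<Rightarrow> (('a::comm_ring_1) v3 \<Rightarrow> 'a) set" for n where
  mono: "i + j + k \<le> n \<Longrightarrow> (\<lambda>(x,y,z). x^i * y^j * z^k) \<in> PF n"
| add: "f \<in> PF n \<Longrightarrow> g \<in> PF n \<Longrightarrow> (\<lambda>v. f v + g v) \<in> PF n"
| smult: "f \<in> PF n \<Longrightarrow> (\<lambda>v. c * f v) \<in> PF n"

lemma PF_mono: "f \<in> PF n \<Longrightarrow> n \<le> m \<Longrightarrow> f \<in> PF m"
  by (induction rule: PF.induct) (auto intro: PF.intros)

lemma PF_const: "(\<lambda>v. c) \<in> PF n"
proof -
  have "(\<lambda>(x,y,z). x^0 * y^0 * z^0) \<in> PF n" by (rule PF.mono) simp
  hence "(\<lambda>v. c * (\<lambda>(x,y,z). x^0 * y^0 * z^0) v) \<in> PF n" by (rule PF.smult)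
  moreover have "(\<lambda>v. c * (\<lambda>(x,y,z). x^0 * y^0 * z^0) v) = (\<lambda>v. c)" by (auto simp: fun_eq_iff)
  ultimately show ?thesis by simp
qed

lemma PF_sum: "finite A \<Longrightarrow> (\<And>a. a \<in> A \<Longrightarrow> g a \<in> PF n) \<Longrightarrow> (\<lambda>v. \<Sum>a\<in>A. g a v) \<in> PF n"
proof (induction A rule: finite_induct)
  case empty thus ?case using PF_const[of 0 n] by simp
next
  case (insert a A)
  have "(\<lambda>v. g a v + (\<Sum>a\<in>A. g a v)) \<in> PF n" using insert by (intro PF.add) auto
  thus ?case using insert by simp
qed

lemma PF_mult_lin:
  assumes "f \<in> PF n" shows "(\<lambda>v. lf l v * f v) \<in> PF (Suc n)"
  using assms
proof (induction rule: PF.induct)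
  case (mono i j k)
  obtain a b c where l: "l = (a,b,c)" by (cases l) auto
  have m1: "(\<lambda>(x,y,z). x^(Suc i) * y^j * z^k) \<in> PF (Suc n)" using mono by (intro PF.mono) simp
  have m2: "(\<lambda>(x,y,z). x^i * y^(Suc j) * z^k) \<in> PF (Suc n)" using mono by (intro PF.mono) simp
  have m3: "(\<lambda>(x,y,z). x^i * y^j * z^(Suc k)) \<in> PF (Suc n)" using mono by (intro PF.mono) simp
  have "(\<lambda>v. a * (\<lambda>(x,y,z). x^(Suc i) * y^j * z^k) v + b * (\<lambda>(x,y,z). x^i * y^(Suc j) * z^k) v
            + c * (\<lambda>(x,y,z). x^i * y^j * z^(Suc k)) v) \<in> PF (Suc n)"
    by (intro PF.add PF.smult m1 m2 m3)
  moreover have "(\<lambda>v. a * (\<lambda>(x,y,z). x^(Suc i) * y^j * z^k) v + b * (\<lambda>(x,y,z). x^i * y^(Suc j) * z^k) v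
            + c * (\<lambda>(x,y,z). x^i * y^j * z^(Suc k)) v) = (\<lambda>v. lf l v * (\<lambda>(x,y,z). x^i * y^j * z^k) v)"
    by (auto simp: fun_eq_iff l algebra_simps)
  ultimately show ?case by simp
next
  case (add f g)
  have "(\<lambda>v. lf l v * f v + lf l v * g v) \<in> PF (Suc n)" using add by (intro PF.add)
  thus ?case by (simp add: algebra_simps)
next
  case (smult f c)
  have "(\<lambda>v. c * (lf l v * f v)) \<in> PF (Suc n)" using smult by (intro PF.smult)
  thus ?case by (simp add: algebra_simps)
qed

lemma PF_pow_lin: "g \<in> PF n \<Longrightarrow> (\<lambda>v. lf l v ^ i * g v) \<in> PF (n + i)"
proof (induction i)
  case 0 thus ?case by simp
next
  case (Suc i)
  hence "(\<lambda>v. lf l v * (lf l v ^ i * g v)) \<in> PF (Suc (n + i))" by (intro PF_mult_lin) auto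
  thus ?case by (simp add: algebra_simps)
qed

lemma PF_comp:
  assumes "f \<in> PF n"
  shows "(\<lambda>v. f (lf l1 v, lf l2 v, lf l3 v)) \<in> PF n"
  using assms
proof (induction rule: PF.induct)
  case (mono i j k)
  have "(\<lambda>v. lf l1 v ^ i * (lf l2 v ^ j * (lf l3 v ^ k * 1))) \<in> PF (0 + k + j + i)"
    by (intro PF_pow_lin PF_const)
  hence "(\<lambda>v. lf l1 v ^ i * (lf l2 v ^ j * (lf l3 v ^ k * 1))) \<in> PF n"
    by (rule PF_mono) (use mono in simp)
  thus ?case by (simp add: algebra_simps)
next
  case (add f g) thus ?case by (auto intro: PF.intros)
next
  case (smult f c) thus ?case by (auto intro: PF.intros)
qed

lemma sum_UNIV3: "(\<Sum>v\<in>UNIV. h v) = (\<Sum>x\<in>UNIV. \<Sum>y\<in>UNIV. \<Sum>z\<in>UNIV. h (x,y,z))"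
  for h :: "('a::finite) v3 \<Rightarrow> 'b::comm_monoid_add"
proof -
  have "(\<Sum>x\<in>UNIV. \<Sum>y\<in>UNIV. \<Sum>z\<in>UNIV. h (x,y,z)) = (\<Sum>x\<in>UNIV. \<Sum>yz\<in>UNIV \<times> UNIV. h (x,yz))"
    by (simp add: sum.cartesian_product case_prod_beta)
  also have "\<dots> = (\<Sum>v\<in>UNIV \<times> (UNIV \<times> UNIV). h v)"
    by (simp add: sum.cartesian_product case_prod_beta)
  finally show ?thesis by simp
qed

lemma PF_sum_zero:
  fixes f :: "('a::{finite,field}) v3 \<Rightarrow> 'a"
  assumes "f \<in> PF n" "n < 3 * (card (UNIV::'a set) - 1)"
  shows "(\<Sum>v\<in>UNIV. f v) = 0"
  using assms
proof (induction rule: PF.induct)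
  case (mono i j k)
  have "(\<Sum>v\<in>UNIV. (\<lambda>(x,y,z). (x::'a)^i * y^j * z^k) v) = (\<Sum>x\<in>UNIV. x^i * (\<Sum>y\<in>UNIV. y^j * (\<Sum>z\<in>UNIV. z^k)))"
    by (simp add: sum_UNIV3 sum_distrib_left mult.assoc)
  also have "\<dots> = (\<Sum>x\<in>UNIV. x^i) * ((\<Sum>y\<in>UNIV. y^j) * (\<Sum>z\<in>UNIV. z^k))"
    by (simp add: sum_distrib_right)
  finally have "(\<Sum>v\<in>UNIV. (\<lambda>(x,y,z). (x::'a)^i * y^j * z^k) v) = (\<Sum>x\<in>UNIV. x^i) * ((\<Sum>y\<in>UNIV. y^j) * (\<Sum>z\<in>UNIV. z^k))" .
  moreover have "i < card (UNIV::'a set) - 1 \<or> j < card (UNIV::'a set) - 1 \<or> k < card (UNIV::'a set) - 1"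
    using mono by linarith
  ultimately show ?case using ff_sum_pow[of i, where 'a='a] ff_sum_pow[of j, where 'a='a] ff_sum_pow[of k, where 'a='a]
    by auto
next
  case (add f g) thus ?case by (simp add: sum.distrib)
next
  case (smult f c) thus ?case by (simp add: sum_distrib_left[symmetric])
qed

lemma heval_PF: "heval d F \<in> PF d"
proof -
  have "(\<lambda>v. \<Sum>i\<le>d. (\<lambda>i v. \<Sum>j\<le>d-i. (\<lambda>j v. F (i,j,d-i-j) * (\<lambda>(x,y,z). x^i * y^j * z^(d-i-j)) v) j v) i v) \<in> PF d"
    by (auto intro!: PF_sum PF.smult PF.mono)
  moreover have "(\<lambda>v. \<Sum>i\<le>d. (\<lambda>i v. \<Sum>j\<le>d-i. (\<lambda>j v. F (i,j,d-i-j) * (\<lambda>(x,y,z). x^i * y^j * z^(d-i-j)) v) j v) i v) = heval d F"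
    by (auto simp: fun_eq_iff heval_def algebra_simps)
  ultimately show ?thesis by simp
qed

lemma heval_hom: "heval d F (c*x, c*y, c*z) = c^d * heval d F (x,y,z)"
proof -
  have t: "\<And>i j. i \<le> d \<Longrightarrow> j \<le> d - i \<Longrightarrow> F (i, j, d - i - j) * (c * x) ^ i * (c * y) ^ j * (c * z) ^ (d - i - j) =
          c ^ d * (F (i, j, d - i - j) * x ^ i * y ^ j * z ^ (d - i - j))"
  proof -
    fix i j assume "i \<le> d" "j \<le> d-i"
    hence "i + j + (d - i - j) = d" by auto
    hence "c^d = c^i * c^j * c^(d-i-j)" by (metis power_add)
    thus "F (i, j, d - i - j) * (c * x) ^ i * (c * y) ^ j * (c * z) ^ (d - i - j) =
          c ^ d * (F (i, j, d - i - j) * x ^ i * y ^ j * z ^ (d - i - j))"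
      by (simp add: power_mult_distrib algebra_simps)
  qed
  have "heval d F (c*x, c*y, c*z) = (\<Sum>i\<le>d. \<Sum>j\<le>d-i. F (i, j, d - i - j) * (c * x) ^ i * (c * y) ^ j * (c * z) ^ (d - i - j))"
    by (simp add: heval_def)
  also have "\<dots> = (\<Sum>i\<le>d. \<Sum>j\<le>d-i. c^d * (F (i,j,d-i-j) * x^i * y^j * z^(d-i-j)))"
    by (rule sum.cong[OF refl], rule sum.cong[OF refl], rule t) auto
  also have "\<dots> = c^d * heval d F (x,y,z)" by (simp add: heval_def sum_distrib_left)
  finally show ?thesis .
qed

lemma card_fibers:
  fixes g :: "'b \<Rightarrow> 'c::finite"
  assumes "finite S"
  shows "card S = (\<Sum>y\<in>UNIV. card {x\<in>S. g x = y})"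
proof -
  have "(\<Sum>y\<in>UNIV. sum (\<lambda>x. 1::nat) {x. x \<in> S \<and> g x = y}) = sum (\<lambda>x. 1) S"
    by (rule sum.group) (use assms in auto)
  thus ?thesis by simp
qed

lemma ff_delta:
  fixes c a :: "'a::{finite,field}"
  shows "(\<Sum>e<card (UNIV::'a set). c^e * a^(card (UNIV::'a set) - 1 - e)) = (if c = a then 0 else 1)"
proof -
  let ?q = "card (UNIV::'a set)"
  have q2: "?q \<ge> 2" by (rule ff_card_ge2)
  show ?thesis
  proof (cases "c = a")
    case True
    have "(\<Sum>e<?q. c^e * a^(?q - 1 - e)) = (\<Sum>e<?q. a^(?q - 1))"
    proof (intro sum.cong refl)
      fix e assume "e \<in> {..<?q}"
      hence "e + (?q - 1 - e) = ?q - 1" by auto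
      thus "c^e * a^(?q - 1 - e) = a^(?q - 1)" using True by (metis power_add)
    qed
    also have "\<dots> = of_nat ?q * a^(?q - 1)" by simp
    finally show ?thesis using True ff_char[where 'a='a] by simp
  next
    case False
    have "c^?q - a^?q = (c - a) * (\<Sum>i<?q. a^(?q - Suc i) * c^i)" by (rule power_diff_sumr2)
    hence "c - a = (c - a) * (\<Sum>i<?q. c^i * a^(?q - 1 - i))"
      by (simp add: ff_pow_q mult.commute)
    hence "(c - a) * ((\<Sum>i<?q. c^i * a^(?q - 1 - i)) - 1) = 0" by (simp add: algebra_simps)
    thus ?thesis using False by simp
  qed
qed

lemma ff_interp:
  fixes M :: "'a::{finite,field} \<Rightarrow> 'a"
  assumes j: "j < card (UNIV::'a set)"
  assumes H: "\<And>i. i + j \<le> card (UNIV::'a set) - 2 \<Longrightarrow> (\<Sum>c\<in>UNIV. c^i * M c) = 0"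
  shows "\<exists>P. degree P \<le> j \<and> (\<forall>c. M c = poly P c)"
proof -
  let ?q = "card (UNIV::'a set)"
  have q2: "?q \<ge> 2" by (rule ff_card_ge2)
  define B where "B e = (\<Sum>a\<in>UNIV. M a * a^(?q - 1 - e))" for e
  have B0: "B e = 0" if "j < e" "e < ?q" for e
  proof -
    have "(?q - 1 - e) + j \<le> ?q - 2" using that by auto
    hence "(\<Sum>c\<in>UNIV. c^(?q - 1 - e) * M c) = 0" by (rule H)
    thus ?thesis by (simp add: B_def mult.commute)
  qed
  define co where "co e = (if e = 0 then (\<Sum>a\<in>UNIV. M a) - B 0 else - B e)" for e
  define P where "P = (\<Sum>e\<le>j. monom (co e) e)"
  have "degree P \<le> j" unfolding P_def
    by (intro degree_sum_le) (auto intro: order.trans[OF degree_monom_le])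
  moreover have "M c = poly P c" for c
  proof -
    have "M c = (\<Sum>a\<in>UNIV. if c = a then M a else 0)" by (simp add: sum.delta)
    also have "\<dots> = (\<Sum>a\<in>UNIV. M a * (if c = a then 1 else 0))" by (intro sum.cong) auto
    also have "\<dots> = (\<Sum>a\<in>UNIV. M a * (1 - (\<Sum>e<?q. c^e * a^(?q - 1 - e))))"
      by (rule sum.cong[OF refl]) (subst ff_delta, simp)
    also have "\<dots> = (\<Sum>a\<in>UNIV. M a) - (\<Sum>e<?q. c^e * B e)"
      by (simp add: B_def algebra_simps sum_subtractf sum_distrib_left sum_distrib_right)
         (rule sum.swap)
    also have "(\<Sum>e<?q. c^e * B e) = (\<Sum>e\<le>j. c^e * B e)"
    proof -
      have "{..j} \<subseteq> {..<?q}" using j by auto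
      thus ?thesis using B0 by (intro sum.mono_neutral_right) auto
    qed
    also have "(\<Sum>a\<in>UNIV. M a) - (\<Sum>e\<le>j. c^e * B e) = (\<Sum>e\<le>j. co e * c^e)"
    proof -
      have "(\<Sum>e\<le>j. co e * c^e) = co 0 * c^0 + (\<Sum>e\<in>{1..j}. co e * c^e)"
        by (simp add: atMost_atLeast0 sum.atLeast_Suc_atMost)
      moreover have "(\<Sum>e\<le>j. c^e * B e) = c^0 * B 0 + (\<Sum>e\<in>{1..j}. c^e * B e)"
        by (simp add: atMost_atLeast0 sum.atLeast_Suc_atMost)
      moreover have "(\<Sum>e\<in>{1..j}. co e * c^e) = - (\<Sum>e\<in>{1..j}. c^e * B e)"
        by (simp add: co_def sum_negf[symmetric] mult.commute)
      ultimately show ?thesis by (simp add: co_def)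
    qed
    also have "\<dots> = poly P c" by (simp add: P_def poly_sum poly_monom)
    finally show ?thesis .
  qed
  ultimately show ?thesis by blast
qed

definition aff :: "('a::comm_ring_1) v3 \<Rightarrow> 'a \<times> 'a \<Rightarrow> 'a" where
  "aff a p = lf a (fst p, snd p, 1)"

lemma aff_simp[simp]: "aff (a1,a2,a3) (s,t) = a1*s + a2*t + a3" by (simp add: aff_def)

lemma sum_UNIV2: "(\<Sum>p\<in>UNIV. h p) = (\<Sum>a\<in>UNIV. \<Sum>c\<in>UNIV. h (a,c))"
  for h :: "('a::finite) \<times> 'a \<Rightarrow> 'b::comm_monoid_add"
  by (simp add: sum.cartesian_product)

lemma poly_altdef_le:
  fixes P :: "'a::comm_ring_1 poly"
  assumes "degree P \<le> n"
  shows "poly P x = (\<Sum>i\<le>n. coeff P i * x^i)"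
proof -
  have "poly P x = (\<Sum>i\<le>degree P. coeff P i * x^i)" by (rule poly_altdef)
  also have "\<dots> = (\<Sum>i\<le>n. coeff P i * x^i)"
    using assms by (intro sum.mono_neutral_left) (auto simp: coeff_eq_0)
  finally show ?thesis .
qed

lemma arith_aux:
  fixes r k :: nat
  assumes "k + r * k \<le> 2 * (r + k) - 1" "r \<ge> 2" "k \<ge> 3" "r + k \<ge> 7"
  shows False
proof -
  obtain r' k' where "r = r' + 2" "k = k' + 3" using assms by (metis le_add_diff_inverse2)
  thus False using assms(1,4) by (simp add: algebra_simps)
qed

locale AP =
  fixes f :: "'a::{finite,field} \<times> 'a \<Rightarrow> 'a"
  assumes mom: "\<And>i j a b. i + j \<le> card (UNIV::'a set) - 2 \<Longrightarrow> (\<Sum>p\<in>UNIV. f p * aff a p ^ i * aff b p ^ j) = 0"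
    and lsum: "\<And>d1 d2 s0 t0. (d1,d2) \<noteq> (0,0) \<Longrightarrow> (\<Sum>t\<in>UNIV. f (s0 + t*d1, t0 + t*d2)) \<noteq> 0"
    and cnt: "card {p. f p \<noteq> 0} = 2 * card (UNIV::'a set) - 1"
    and q7: "card (UNIV::'a set) \<ge> 7"
begin


definition M :: "nat \<Rightarrow> 'a \<Rightarrow> 'a" where "M j c = (\<Sum>a\<in>UNIV. f (a,c) * a^j)"
definition Xr :: "'a \<Rightarrow> 'a set" where "Xr c = {a. f (a,c) \<noteq> 0}"
definition rc :: "'a \<Rightarrow> nat" where "rc c = card (Xr c)"

lemma std_moment:
  assumes "i + j \<le> card (UNIV::'a set) - 2"
  shows "(\<Sum>c\<in>UNIV. c^i * M j c) = 0"
proof -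
  have "(\<Sum>p\<in>UNIV. f p * aff (1,0,0) p ^ j * aff (0,1,0) p ^ i) = 0"
    using assms by (intro mom) simp
  hence "(\<Sum>a\<in>UNIV. \<Sum>c\<in>UNIV. f (a,c) * a ^ j * c ^ i) = 0" by (simp add: sum_UNIV2)
  hence "(\<Sum>c\<in>UNIV. \<Sum>a\<in>UNIV. f (a,c) * a ^ j * c ^ i) = 0" by (subst (asm) sum.swap)
  thus ?thesis by (simp add: M_def sum_distrib_left algebra_simps)
qed

lemma M_poly:
  assumes "j \<le> card (UNIV::'a set) - 2"
  shows "\<exists>P. degree P \<le> j \<and> (\<forall>c. M j c = poly P c)"
proof (rule ff_interp)
  show "j < card (UNIV::'a set)" using assms q7 by linarith
  fix i assume "i + j \<le> card (UNIV::'a set) - 2"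
  thus "(\<Sum>c\<in>UNIV. c^i * M j c) = 0" by (rule std_moment)
qed

lemma M0_const: "\<exists>\<kappa>. \<kappa> \<noteq> 0 \<and> (\<forall>c. M 0 c = \<kappa>)"
proof -
  obtain P where P: "degree P \<le> 0" "\<forall>c. M 0 c = poly P c" using M_poly[of 0] q7 by auto
  have c: "M 0 c = coeff P 0" for c using P poly_altdef_le[OF P(1)] by simp
  have "M 0 0 \<noteq> 0"
    using lsum[of 1 0 0 0] by (simp add: M_def)
  thus ?thesis using c by metis
qed

lemma M_Xr: "M j c = (\<Sum>a\<in>Xr c. f (a,c) * a^j)"
  unfolding M_def Xr_def by (intro sum.mono_neutral_right) auto

lemma rc_pos: "rc c \<ge> 1"
proof -
  obtain \<kappa> where k: "\<kappa> \<noteq> 0" "\<forall>c. M 0 c = \<kappa>" using M0_const by blast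
  have "Xr c \<noteq> {}" using k M_Xr[of 0 c] by auto
  thus ?thesis unfolding rc_def by (simp add: Suc_leI card_gt_0_iff)
qed

lemma sum_rc: "(\<Sum>c\<in>UNIV. rc c) = 2 * card (UNIV::'a set) - 1"
proof -
  have "card {p. f p \<noteq> 0} = (\<Sum>c\<in>UNIV. card {p\<in>{p. f p \<noteq> 0}. snd p = c})"
    by (rule card_fibers) simp
  also have "\<dots> = (\<Sum>c\<in>UNIV. rc c)"
  proof (intro sum.cong refl)
    fix c
    have "{p\<in>{p. f p \<noteq> 0}. snd p = c} = (\<lambda>a. (a,c)) ` Xr c" by (auto simp: Xr_def)
    thus "card {p\<in>{p. f p \<noteq> 0}. snd p = c} = rc c"
      by (simp add: rc_def card_image inj_on_def)
  qed
  finally show ?thesis using cnt by simp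
qed


lemma std_frame:
  assumes k3: "card {c. rc c = 1} \<ge> 3"
  shows "\<exists>c0 m0 m1. \<forall>p. f p \<noteq> 0 \<longleftrightarrow> (snd p = c0 \<or> fst p = m0 + m1 * snd p)"
proof -
  let ?q = "card (UNIV::'a set)"
  define C1 where "C1 = {c. rc c = 1}"
  define k where "k = card C1"
  obtain \<kappa> where kap: "\<kappa> \<noteq> 0" "\<And>c. M 0 c = \<kappa>" using M0_const by blast
  have "(1::nat) \<le> ?q - 2" using q7 by linarith
  then obtain P1 where P1: "degree P1 \<le> 1" "\<And>c. M 1 c = poly P1 c" using M_poly[of 1] by blast
  define m0 where "m0 = coeff P1 0 / \<kappa>"
  define m1 where "m1 = coeff P1 1 / \<kappa>"
  define mu where "mu c = m0 + m1 * c" for c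
  have s1: "(\<Sum>i\<le>(1::nat). g i) = g 0 + g 1" for g :: "nat \<Rightarrow> 'a"
    by (simp add: numeral_1_eq_Suc_0 atMost_Suc)
  have M1: "M 1 c = \<kappa> * mu c" for c
    using P1(2)[of c] poly_altdef_le[OF P1(1), of c] kap(1) s1
    by (simp add: mu_def m0_def m1_def algebra_simps)
  have sing: "Xr c = {mu c}" if "c \<in> C1" for c
  proof -
    have "card (Xr c) = 1" using that by (simp add: C1_def rc_def)
    then obtain a where a: "Xr c = {a}" by (rule card_1_singletonE)
    have "M 0 c = f (a,c)" using M_Xr[of 0 c] a by simp
    hence fa: "f (a,c) = \<kappa>" using kap by simp
    have "M 1 c = f (a,c) * a" using M_Xr[of 1 c] a by simp
    hence "\<kappa> * a = \<kappa> * mu c" using M1 fa by auto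
    hence "a = mu c" using kap(1) by simp
    thus ?thesis using a by simp
  qed
  have Msing: "M j c = \<kappa> * mu c ^ j" if "c \<in> C1" for c j
  proof -
    have "M j c = f (mu c, c) * mu c ^ j" using M_Xr[of j c] sing[OF that] by simp
    moreover have "M 0 c = f (mu c, c)" using M_Xr[of 0 c] sing[OF that] by simp
    ultimately show ?thesis using kap by simp
  qed
  have kleq: "k \<le> ?q" unfolding k_def by (rule card_mono) auto
  have kle: "k \<le> ?q - 1"
  proof (rule ccontr)
    assume "\<not> k \<le> ?q - 1"
    hence "k = ?q" using kleq by simp
    hence "C1 = UNIV" unfolding k_def by (metis card_subset_eq finite_UNIV subset_UNIV)
    hence "(\<Sum>c\<in>UNIV. rc c) = (\<Sum>c\<in>(UNIV::'a set). 1)" by (intro sum.cong) (auto simp: C1_def)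
    hence "2 * ?q - 1 = ?q" using sum_rc by simp
    thus False using q7 by simp
  qed
  have Mall: "M j c = \<kappa> * mu c ^ j" if "j < k" for j c
  proof -
    have "j \<le> ?q - 2" using that kle by linarith
    then obtain Pj where Pj: "degree Pj \<le> j" "\<And>c. M j c = poly Pj c" using M_poly[of j] by auto
    define Qj where "Qj = smult \<kappa> ([:m0, m1:]^j)"
    have dQ: "degree Qj \<le> j"
    proof -
      have "degree Qj \<le> degree ([:m0, m1:]^j)" unfolding Qj_def by (rule degree_smult_le)
      also have "\<dots> \<le> degree [:m0, m1:] * j" by (rule degree_power_le)
      also have "\<dots> \<le> 1 * j" by (intro mult_right_mono) auto
      finally show ?thesis by simp
    qed
    have pQ: "poly Qj x = \<kappa> * mu x ^ j" for x by (simp add: Qj_def mu_def algebra_simps)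
    have "Pj = Qj"
    proof (rule poly_eqI_degree[of C1])
      fix x assume "x \<in> C1"
      thus "poly Pj x = poly Qj x" using Pj(2)[of x] Msing[of x j] pQ[of x] by simp
    next
      show "degree Pj < card C1" using Pj(1) that k_def by simp
      show "degree Qj < card C1" using dQ that k_def by simp
    qed
    thus ?thesis using Pj(2)[of c] pQ[of c] by simp
  qed
  have wid: "(\<Sum>a\<in>UNIV. f (a,c) * poly h a) = \<kappa> * poly h (mu c)" if "degree h < k" for h c
  proof -
    have "(\<Sum>a\<in>UNIV. f (a,c) * poly h a) = (\<Sum>a\<in>UNIV. \<Sum>i\<le>degree h. coeff h i * (f (a,c) * a^i))"
      by (simp add: poly_altdef sum_distrib_left algebra_simps)
    also have "\<dots> = (\<Sum>i\<le>degree h. coeff h i * M i c)"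
      by (subst sum.swap) (simp add: M_def sum_distrib_left)
    also have "\<dots> = (\<Sum>i\<le>degree h. coeff h i * (\<kappa> * mu c ^ i))"
      using that by (intro sum.cong refl) (simp add: Mall)
    also have "\<dots> = \<kappa> * poly h (mu c)"
      by (simp add: poly_altdef sum_distrib_left algebra_simps)
    finally show ?thesis .
  qed
  have big: "rc c \<ge> k" if "rc c \<ge> 2" for c
  proof (rule ccontr)
    assume "\<not> rc c \<ge> k"
    hence lt: "card (Xr c) < k" by (simp add: rc_def)
    have fin: "finite (Xr c)" by simp
    define h1 where "h1 = (\<Prod>a\<in>Xr c. [:-a, 1:])"
    have dh1: "degree h1 \<le> card (Xr c)"
    proof -
      have "degree h1 \<le> sum (degree \<circ> (\<lambda>a. [:-a, 1:])) (Xr c)"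
        unfolding h1_def by (rule degree_prod_sum_le[OF fin])
      thus ?thesis by simp
    qed
    have "(\<Sum>a\<in>UNIV. f (a,c) * poly h1 a) = 0"
      by (intro sum.neutral) (auto simp: h1_def poly_prod Xr_def)
    hence "\<kappa> * poly h1 (mu c) = 0" using wid[of h1 c] dh1 lt by simp
    hence "(\<Prod>a\<in>Xr c. mu c - a) = 0" using kap(1) by (simp add: h1_def poly_prod)
    hence muin: "mu c \<in> Xr c" using fin by (simp add: prod_zero_iff)
    have "\<exists>a1. a1 \<in> Xr c \<and> a1 \<noteq> mu c"
    proof (rule ccontr)
      assume "\<not> ?thesis"
      hence "Xr c \<subseteq> {mu c}" by auto
      hence "card (Xr c) \<le> 1" by (metis card.empty card_mono finite.emptyI finite.insertI is_singletonI is_singleton_altdef le_numeral_extra(4) subset_singletonD zero_le_one)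
      thus False using that by (simp add: rc_def)
    qed
    then obtain a1 where a1: "a1 \<in> Xr c" "a1 \<noteq> mu c" by blast
    define h2 where "h2 = (\<Prod>a\<in>Xr c - {a1}. [:-a, 1:])"
    have dh2: "degree h2 \<le> card (Xr c - {a1})"
    proof -
      have "degree h2 \<le> sum (degree \<circ> (\<lambda>a. [:-a, 1:])) (Xr c - {a1})"
        unfolding h2_def by (rule degree_prod_sum_le) simp
      thus ?thesis by simp
    qed
    have "card (Xr c - {a1}) < card (Xr c)" using a1 fin by (intro psubset_card_mono) auto
    hence dh2': "degree h2 < k" using dh2 lt by linarith
    have "(\<Sum>a\<in>UNIV. f (a,c) * poly h2 a) = (\<Sum>a\<in>{a1}. f (a,c) * poly h2 a)"
      by (intro sum.mono_neutral_right) (auto simp: h2_def poly_prod Xr_def)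
    also have "\<dots> = f (a1,c) * (\<Prod>a\<in>Xr c - {a1}. a1 - a)" by (simp add: h2_def poly_prod)
    finally have e1: "(\<Sum>a\<in>UNIV. f (a,c) * poly h2 a) = f (a1,c) * (\<Prod>a\<in>Xr c - {a1}. a1 - a)" .
    have "f (a1,c) \<noteq> 0" using a1 by (simp add: Xr_def)
    moreover have "(\<Prod>a\<in>Xr c - {a1}. a1 - a) \<noteq> 0" using fin by (simp add: prod_zero_iff)
    ultimately have "(\<Sum>a\<in>UNIV. f (a,c) * poly h2 a) \<noteq> 0" using e1 by simp
    moreover have "poly h2 (mu c) = 0"
      using muin a1 fin by (simp add: h2_def poly_prod prod_zero_iff)
    ultimately show False using wid[OF dh2', of c] by simp
  qed
  have split: "(\<Sum>c\<in>UNIV. rc c) = (\<Sum>c\<in>C1. rc c) + (\<Sum>c\<in>UNIV - C1. rc c)"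
    by (metis add.commute finite_UNIV subset_UNIV sum.subset_diff)
  have sC1: "(\<Sum>c\<in>C1. rc c) = k" by (simp add: C1_def k_def)
  have cD: "card (UNIV - C1) = ?q - k" by (simp add: card_Diff_subset k_def)
  have "(\<Sum>c\<in>UNIV - C1. rc c) \<ge> (\<Sum>c\<in>UNIV - C1. k)"
  proof (intro sum_mono)
    fix c assume "c \<in> UNIV - C1"
    hence "rc c \<noteq> 1" by (simp add: C1_def)
    hence "rc c \<ge> 2" using rc_pos[of c] by linarith
    thus "k \<le> rc c" by (rule big)
  qed
  hence ineq: "2 * ?q - 1 \<ge> k + (?q - k) * k" using split sC1 cD sum_rc by simp
  have k3': "k \<ge> 3" using k3 by (simp add: k_def C1_def)
  have kq: "k = ?q - 1"
  proof (rule ccontr)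
    assume "k \<noteq> ?q - 1"
    hence "k \<le> ?q - 2" using kle by linarith
    hence "?q - k \<ge> 2" "(?q - k) * k \<ge> 2 * k" using q7 by auto
    have "k + (?q - k) * k \<le> 2 * ((?q - k) + k) - 1" using ineq kleq by simp
    moreover have "(?q - k) + k \<ge> 7" using q7 kleq by simp
    ultimately show False using arith_aux \<open>?q - k \<ge> 2\<close> k3' by blast
  qed
  have "card (UNIV - C1) = 1" using cD kq q7 by simp
  then obtain c0 where c0: "UNIV - C1 = {c0}" by (rule card_1_singletonE)
  have "(\<Sum>c\<in>UNIV - C1. rc c) = rc c0" using c0 by simp
  hence "rc c0 = ?q" using split sC1 sum_rc kq q7 by simp
  hence Xc0: "Xr c0 = UNIV" unfolding rc_def by (metis card_subset_eq finite_UNIV subset_UNIV)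
  have "\<forall>p. f p \<noteq> 0 \<longleftrightarrow> (snd p = c0 \<or> fst p = m0 + m1 * snd p)"
  proof
    fix p :: "'a \<times> 'a"
    obtain a c where p: "p = (a,c)" by (cases p)
    show "f p \<noteq> 0 \<longleftrightarrow> (snd p = c0 \<or> fst p = m0 + m1 * snd p)"
    proof (cases "c = c0")
      case True thus ?thesis using Xc0 p by (auto simp: Xr_def)
    next
      case False
      hence "c \<in> C1" using c0 by auto
      hence "Xr c = {mu c}" by (rule sing)
      thus ?thesis using p False by (auto simp: Xr_def mu_def)
    qed
  qed
  thus ?thesis by blast
qed
end

context AP
begin

lemma AP_shear: "AP (\<lambda>p. f (fst p, snd p + m * fst p))"
proof
  fix i j :: nat and a b :: "'a v3"
  assume ij: "i + j \<le> card (UNIV::'a set) - 2"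
  obtain a1 a2 a3 where a: "a = (a1,a2,a3)" by (cases a) auto
  obtain b1 b2 b3 where b: "b = (b1,b2,b3)" by (cases b) auto
  have "(\<Sum>p\<in>UNIV. f (fst p, snd p + m * fst p) * aff a p ^ i * aff b p ^ j)
      = (\<Sum>p\<in>UNIV. f p * aff (a1 - m*a2, a2, a3) p ^ i * aff (b1 - m*b2, b2, b3) p ^ j)"
    by (rule sum.reindex_bij_witness[where i="\<lambda>p. (fst p, snd p - m * fst p)" and j="\<lambda>p. (fst p, snd p + m * fst p)"], auto simp: a b algebra_simps)
  also have "\<dots> = 0" using ij by (rule mom)
  finally show "(\<Sum>p\<in>UNIV. f (fst p, snd p + m * fst p) * aff a p ^ i * aff b p ^ j) = 0" .
next
  fix d1 d2 s0 t0 :: 'a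
  assume d: "(d1,d2) \<noteq> (0,0)"
  have "(\<Sum>t\<in>UNIV. f (fst (s0 + t * d1, t0 + t * d2), snd (s0 + t * d1, t0 + t * d2) + m * fst (s0 + t * d1, t0 + t * d2)))
      = (\<Sum>t\<in>UNIV. f (s0 + t * d1, (t0 + m * s0) + t * (d2 + m * d1)))"
    by (simp add: algebra_simps)
  also have "\<dots> \<noteq> 0" using d by (intro lsum) auto
  finally show "(\<Sum>t\<in>UNIV. f (fst (s0 + t * d1, t0 + t * d2), snd (s0 + t * d1, t0 + t * d2) + m * fst (s0 + t * d1, t0 + t * d2))) \<noteq> 0" .
next
  have "{p. f (fst p, snd p + m * fst p) \<noteq> 0} = (\<lambda>p. (fst p, snd p - m * fst p)) ` {p. f p \<noteq> 0}"
  proof (auto simp: image_iff)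
    fix a b assume "f (a, b + m * a) \<noteq> 0"
    thus "\<exists>ba. f (a, ba) \<noteq> 0 \<and> b = ba - m * a" by (intro exI[of _ "b + m * a"]) simp
  qed
  moreover have "inj (\<lambda>p::'a\<times>'a. (fst p, snd p - m * fst p))"
    by (auto simp: inj_on_def prod_eq_iff)
  ultimately show "card {p. f (fst p, snd p + m * fst p) \<noteq> 0} = 2 * card (UNIV::'a set) - 1"
    using cnt by (simp add: card_image inj_on_subset)
next
  show "card (UNIV::'a set) \<ge> 7" by (rule q7)
qed

lemma AP_swap: "AP (\<lambda>p. f (snd p, fst p))"
proof
  fix i j :: nat and a b :: "'a v3"
  assume ij: "i + j \<le> card (UNIV::'a set) - 2"
  obtain a1 a2 a3 where a: "a = (a1,a2,a3)" by (cases a) auto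
  obtain b1 b2 b3 where b: "b = (b1,b2,b3)" by (cases b) auto
  have "(\<Sum>p\<in>UNIV. f (snd p, fst p) * aff a p ^ i * aff b p ^ j)
      = (\<Sum>p\<in>UNIV. f p * aff (a2, a1, a3) p ^ i * aff (b2, b1, b3) p ^ j)"
    by (rule sum.reindex_bij_witness[where i="\<lambda>p. (snd p, fst p)" and j="\<lambda>p. (snd p, fst p)"], auto simp: a b algebra_simps)
  also have "\<dots> = 0" using ij by (rule mom)
  finally show "(\<Sum>p\<in>UNIV. f (snd p, fst p) * aff a p ^ i * aff b p ^ j) = 0" .
next
  fix d1 d2 s0 t0 :: 'a
  assume d: "(d1,d2) \<noteq> (0,0)"
  have "(\<Sum>t\<in>UNIV. f (snd (s0 + t * d1, t0 + t * d2), fst (s0 + t * d1, t0 + t * d2)))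
      = (\<Sum>t\<in>UNIV. f (t0 + t * d2, s0 + t * d1))" by simp
  also have "\<dots> \<noteq> 0" using d by (intro lsum) auto
  finally show "(\<Sum>t\<in>UNIV. f (snd (s0 + t * d1, t0 + t * d2), fst (s0 + t * d1, t0 + t * d2))) \<noteq> 0" .
next
  have "{p. f (snd p, fst p) \<noteq> 0} = (\<lambda>p. (snd p, fst p)) ` {p. f p \<noteq> 0}"
    by (auto simp: image_iff)
  moreover have "inj (\<lambda>p::'a\<times>'a. (snd p, fst p))"
    by (auto simp: inj_on_def prod_eq_iff)
  ultimately show "card {p. f (snd p, fst p) \<noteq> 0} = 2 * card (UNIV::'a set) - 1"
    using cnt by (simp add: card_image inj_on_subset)
next
  show "card (UNIV::'a set) \<ge> 7" by (rule q7)
qed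

end

lemma card_UNIV_option: "card (UNIV :: ('a::finite) option set) = Suc (card (UNIV :: 'a set))"
proof -
  have "(UNIV :: 'a option set) = insert None (Some ` UNIV)" by (auto intro: option.exhaust)
  moreover have "card (insert None (Some ` (UNIV::'a set))) = Suc (card (Some ` (UNIV::'a set)))"
    by (rule card_insert_disjoint) auto
  moreover have "card (Some ` (UNIV::'a set)) = card (UNIV::'a set)" by (rule card_image) simp
  ultimately show ?thesis by simp
qed

lemma sum_indicator_card: "finite A \<Longrightarrow> (\<Sum>x\<in>A. if P x then (1::nat) else 0) = card {x\<in>A. P x}"
  by (simp add: sum.If_cases Int_def conj_commute)

context AP
begin

definition key :: "'a option \<Rightarrow> 'a \<times> 'a \<Rightarrow> 'a" where
  "key dd p = (case dd of Some m \<Rightarrow> snd p - m * fst p | None \<Rightarrow> fst p)"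

definition rowcnt :: "'a option \<Rightarrow> 'a \<Rightarrow> nat" where
  "rowcnt dd c = card {p. f p \<noteq> 0 \<and> key dd p = c}"

definition kk :: "'a option \<Rightarrow> nat" where
  "kk dd = card {c. rowcnt dd c = 1}"

lemma line_card: "card {p. key dd p = c} = card (UNIV::'a set)"
proof (cases dd)
  case None
  have "{p. key dd p = c} = (\<lambda>a. (c,a)) ` UNIV" using None by (auto simp: key_def)
  thus ?thesis by (simp add: card_image inj_on_def)
next
  case (Some m)
  have "{p. key dd p = c} = (\<lambda>a. (a, c + m * a)) ` UNIV"
    using Some by (auto simp: key_def image_iff intro!: exI[where x="fst _"])
  thus ?thesis by (simp add: card_image inj_on_def)
qed

lemma rowcnt_pos: "rowcnt dd c \<ge> 1"
proof -
  have "\<exists>p. f p \<noteq> 0 \<and> key dd p = c"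
  proof (cases dd)
    case None
    have "(\<Sum>t\<in>UNIV. f (c + t * 0, 0 + t * 1)) \<noteq> 0" by (intro lsum) simp
    then obtain t where "f (c + t * 0, 0 + t * 1) \<noteq> 0" by (meson sum.not_neutral_contains_not_neutral)
    hence "f (c, t) \<noteq> 0" by simp
    thus ?thesis using None by (intro exI[of _ "(c,t)"]) (simp add: key_def)
  next
    case (Some m)
    have "(\<Sum>t\<in>UNIV. f (0 + t * 1, c + t * m)) \<noteq> 0" by (intro lsum) simp
    then obtain t where "f (0 + t * 1, c + t * m) \<noteq> 0" by (meson sum.not_neutral_contains_not_neutral)
    hence "f (t, c + t * m) \<noteq> 0" by simp
    thus ?thesis using Some by (intro exI[of _ "(t, c + t * m)"]) (simp add: key_def)
  qed
  then obtain p where "f p \<noteq> 0" "key dd p = c" by blast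
  hence "{p. f p \<noteq> 0 \<and> key dd p = c} \<noteq> {}" by blast
  thus ?thesis unfolding rowcnt_def by (simp add: Suc_leI card_gt_0_iff)
qed

lemma zero_line_card: "card {p. f p = 0 \<and> key dd p = c} = card (UNIV::'a set) - rowcnt dd c"
proof -
  have "{p. key dd p = c} = {p. f p = 0 \<and> key dd p = c} \<union> {p. f p \<noteq> 0 \<and> key dd p = c}" by auto
  hence "card {p. key dd p = c} = card {p. f p = 0 \<and> key dd p = c} + card {p. f p \<noteq> 0 \<and> key dd p = c}"
    by (simp add: card_Un_disjoint[symmetric] disjoint_iff)
  thus ?thesis using line_card[of dd c] by (simp add: rowcnt_def)
qed

definition dirQ :: "'a \<times> 'a \<Rightarrow> 'a \<times> 'a \<Rightarrow> 'a option" where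
  "dirQ Q p = (if fst p = fst Q then None else Some ((snd p - snd Q) / (fst p - fst Q)))"

lemma fiber_dir:
  assumes Q: "f Q = 0"
  shows "{p. f p \<noteq> 0 \<and> dirQ Q p = dd} = {p. f p \<noteq> 0 \<and> key dd p = key dd Q}"
proof (cases dd)
  case None thus ?thesis by (auto simp: dirQ_def key_def)
next
  case (Some m)
  show ?thesis
  proof (intro set_eqI iffI)
    fix p assume p: "p \<in> {p. f p \<noteq> 0 \<and> dirQ Q p = dd}"
    hence ne: "fst p \<noteq> fst Q" and r: "(snd p - snd Q) / (fst p - fst Q) = m"
      using Some by (auto simp: dirQ_def split: if_splits)
    hence "snd p - snd Q = m * (fst p - fst Q)" by (auto simp: field_simps)
    thus "p \<in> {p. f p \<noteq> 0 \<and> key dd p = key dd Q}" using p Some by (simp add: key_def algebra_simps)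
  next
    fix p assume p: "p \<in> {p. f p \<noteq> 0 \<and> key dd p = key dd Q}"
    hence k: "snd p - m * fst p = snd Q - m * fst Q" using Some by (simp add: key_def)
    have ne: "fst p \<noteq> fst Q"
    proof
      assume "fst p = fst Q"
      hence "p = Q" using k by (simp add: prod_eq_iff)
      thus False using p Q by simp
    qed
    have "snd p - snd Q = m * (fst p - fst Q)" using k by (simp add: algebra_simps)
    hence "(snd p - snd Q) / (fst p - fst Q) = m" using ne by (simp add: field_simps)
    thus "p \<in> {p. f p \<noteq> 0 \<and> dirQ Q p = dd}" using p ne Some by (simp add: dirQ_def)
  qed
qed

lemma sum_dirs:
  assumes Q: "f Q = 0"
  shows "(\<Sum>dd\<in>UNIV. rowcnt dd (key dd Q)) = 2 * card (UNIV::'a set) - 1"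
proof -
  have "card {p. f p \<noteq> 0} = (\<Sum>dd\<in>UNIV. card {p\<in>{p. f p \<noteq> 0}. dirQ Q p = dd})"
    by (rule card_fibers) simp
  also have "\<dots> = (\<Sum>dd\<in>UNIV. rowcnt dd (key dd Q))"
    using fiber_dir[OF Q] by (simp add: rowcnt_def)
  finally show ?thesis using cnt by simp
qed

lemma three_singletons:
  assumes Q: "f Q = 0"
  shows "card {dd. rowcnt dd (key dd Q) = 1} \<ge> 3"
proof -
  let ?r = "\<lambda>dd. rowcnt dd (key dd Q)"
  have "(\<Sum>dd\<in>(UNIV::'a option set). 2) \<le> (\<Sum>dd\<in>UNIV. ?r dd + (if ?r dd = 1 then 1 else 0))"
  proof (intro sum_mono)
    fix dd :: "'a option"
    show "2 \<le> ?r dd + (if ?r dd = 1 then 1 else 0)" using rowcnt_pos[of dd "key dd Q"] by auto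
  qed
  also have "\<dots> = (2 * card (UNIV::'a set) - 1) + card {dd. ?r dd = 1}"
    by (simp add: sum.distrib sum_dirs[OF Q] sum_indicator_card)
  finally show ?thesis using card_UNIV_option[where 'a='a] q7 by simp
qed

lemma zeros_key_singleton:
  "card {Q. f Q = 0 \<and> rowcnt dd (key dd Q) = 1} = kk dd * (card (UNIV::'a set) - 1)"
proof -
  have "card {Q. f Q = 0 \<and> rowcnt dd (key dd Q) = 1}
      = (\<Sum>c\<in>UNIV. card {Q\<in>{Q. f Q = 0 \<and> rowcnt dd (key dd Q) = 1}. key dd Q = c})"
    by (rule card_fibers) simp
  also have "\<dots> = (\<Sum>c\<in>UNIV. if rowcnt dd c = 1 then card (UNIV::'a set) - 1 else 0)"
  proof (intro sum.cong refl)
    fix c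
    show "card {Q\<in>{Q. f Q = 0 \<and> rowcnt dd (key dd Q) = 1}. key dd Q = c} = (if rowcnt dd c = 1 then card (UNIV::'a set) - 1 else 0)"
    proof (cases "rowcnt dd c = 1")
      case True
      have "{Q\<in>{Q. f Q = 0 \<and> rowcnt dd (key dd Q) = 1}. key dd Q = c} = {Q. f Q = 0 \<and> key dd Q = c}"
        using True by auto
      thus ?thesis using True zero_line_card[of dd c] by simp
    next
      case False
      have "{Q\<in>{Q. f Q = 0 \<and> rowcnt dd (key dd Q) = 1}. key dd Q = c} = {}" using False by auto
      thus ?thesis using False by simp
    qed
  qed
  also have "\<dots> = card {c. rowcnt dd c = 1} * (card (UNIV::'a set) - 1)"
    by (simp add: sum.If_cases Int_def)
  finally show ?thesis by (simp add: kk_def)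
qed

lemma exists_good_dir: "\<exists>dd. kk dd \<ge> 3"
proof (rule ccontr)
  assume "\<not> ?thesis"
  hence le2: "kk dd \<le> 2" for dd by (metis not_le numeral_3_eq_3 less_Suc_eq_le numeral_2_eq_2)
  let ?q = "card (UNIV::'a set)"
  let ?Z = "{Q. f Q = 0}"
  have cZ: "card ?Z = ?q * ?q - (2 * ?q - 1)"
  proof -
    have "(UNIV::('a\<times>'a) set) = ?Z \<union> {p. f p \<noteq> 0}" by auto
    hence "card (UNIV::('a\<times>'a) set) = card ?Z + card {p. f p \<noteq> 0}"
      by (simp add: card_Un_disjoint[symmetric] disjoint_iff)
    moreover have "card (UNIV::('a\<times>'a) set) = ?q * ?q" by (metis UNIV_Times_UNIV card_cartesian_product)
    ultimately show ?thesis using cnt by simp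
  qed
  have "(\<Sum>Q\<in>?Z. 3) \<le> (\<Sum>Q\<in>?Z. card {dd. rowcnt dd (key dd Q) = 1})"
    by (intro sum_mono three_singletons) simp
  also have "\<dots> = (\<Sum>Q\<in>?Z. \<Sum>dd\<in>UNIV. if rowcnt dd (key dd Q) = 1 then 1 else 0)"
    by (simp add: sum_indicator_card)
  also have "\<dots> = (\<Sum>dd\<in>UNIV. \<Sum>Q\<in>?Z. if rowcnt dd (key dd Q) = 1 then 1 else 0)"
    by (rule sum.swap)
  also have "\<dots> = (\<Sum>dd\<in>UNIV. card {Q. f Q = 0 \<and> rowcnt dd (key dd Q) = 1})"
    by (intro sum.cong refl) (simp add: sum_indicator_card)
  also have "\<dots> = (\<Sum>dd\<in>UNIV. kk dd * (?q - 1))" by (intro sum.cong refl) (rule zeros_key_singleton)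
  also have "\<dots> \<le> (\<Sum>dd\<in>(UNIV::'a option set). 2 * (?q - 1))"
    by (intro sum_mono mult_right_mono le2) simp
  also have "\<dots> = Suc ?q * (2 * (?q - 1))" by (simp add: card_UNIV_option)
  finally have "3 * (?q * ?q - (2 * ?q - 1)) \<le> Suc ?q * (2 * (?q - 1))" using cZ by simp
  moreover have "?q * ?q - (2 * ?q - 1) = (?q - 1) * (?q - 1)" using q7
    by (simp add: algebra_simps power2_eq_square diff_mult_distrib diff_mult_distrib2)
  ultimately have "3 * ((?q - 1) * (?q - 1)) \<le> (?q + 1) * (2 * (?q - 1))" by simp
  moreover obtain r where r: "?q = r + 1" using q7 by (metis add.commute le_add_diff_inverse2 le_trans one_le_numeral)
  ultimately have "3 * (r * r) \<le> (r + 2) * (2 * r)" by simp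
  hence "r * r \<le> 4 * r" by (simp add: algebra_simps)
  hence "r \<le> 4" using r q7 by simp
  thus False using r q7 by linarith
qed

end

context AP
begin

lemma two_lines:
  "\<exists>b1 b2 b3 g1 g2 g3. (\<forall>p. f p \<noteq> 0 \<longleftrightarrow> (aff (b1,b2,b3) p = 0 \<or> aff (g1,g2,g3) p = 0)) \<and> b1 * g2 - b2 * g1 \<noteq> 0"
proof -
  obtain dd where dd: "kk dd \<ge> 3" using exists_good_dir by blast
  show ?thesis
  proof (cases dd)
    case None
    interpret G: AP "\<lambda>p. f (snd p, fst p)" by (rule AP_swap)
    have "G.rc c = rowcnt None c" for c
    proof -
      have "{p. f p \<noteq> 0 \<and> key None p = c} = (\<lambda>a. (c,a)) ` {a. f (c,a) \<noteq> 0}"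
        by (auto simp: key_def)
      hence "rowcnt None c = card {a. f (c,a) \<noteq> 0}" by (simp add: rowcnt_def card_image inj_on_def)
      thus ?thesis by (simp add: G.rc_def G.Xr_def)
    qed
    hence "card {c. G.rc c = 1} \<ge> 3" using dd None by (simp add: kk_def)
    then obtain c0 m0 m1 where H: "\<forall>p. f (snd p, fst p) \<noteq> 0 \<longleftrightarrow> (snd p = c0 \<or> fst p = m0 + m1 * snd p)"
      using G.std_frame by blast
    have "\<forall>p. f p \<noteq> 0 \<longleftrightarrow> (aff (1,0,-c0) p = 0 \<or> aff (-m1,1,-m0) p = 0)"
    proof
      fix p :: "'a \<times> 'a"
      obtain s t where p: "p = (s,t)" by (cases p)
      show "f p \<noteq> 0 \<longleftrightarrow> (aff (1,0,-c0) p = 0 \<or> aff (-m1,1,-m0) p = 0)"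
        using H[rule_format, of "(t,s)"] p by (simp add: algebra_simps eq_neg_iff_add_eq_0 add_eq_0_iff2)
    qed
    thus ?thesis by (intro exI[of _ 1] exI[of _ 0] exI[of _ "-c0"] exI[of _ "-m1"] exI[of _ 1] exI[of _ "-m0"]) simp
  next
    case (Some m)
    interpret G: AP "\<lambda>p. f (fst p, snd p + m * fst p)" by (rule AP_shear)
    have "G.rc c = rowcnt (Some m) c" for c
    proof -
      have "{p. f p \<noteq> 0 \<and> key (Some m) p = c} = (\<lambda>a. (a, c + m * a)) ` {a. f (a, c + m * a) \<noteq> 0}"
        by (auto simp: key_def image_iff algebra_simps intro!: exI[where x="fst _"])
      hence "rowcnt (Some m) c = card {a. f (a, c + m * a) \<noteq> 0}" by (simp add: rowcnt_def card_image inj_on_def)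
      thus ?thesis by (simp add: G.rc_def G.Xr_def)
    qed
    hence "card {c. G.rc c = 1} \<ge> 3" using dd Some by (simp add: kk_def)
    then obtain c0 m0 m1 where H: "\<forall>p. f (fst p, snd p + m * fst p) \<noteq> 0 \<longleftrightarrow> (snd p = c0 \<or> fst p = m0 + m1 * snd p)"
      using G.std_frame by blast
    have "\<forall>p. f p \<noteq> 0 \<longleftrightarrow> (aff (-m,1,-c0) p = 0 \<or> aff (1 + m1*m, -m1, -m0) p = 0)"
    proof
      fix p :: "'a \<times> 'a"
      obtain s t where p: "p = (s,t)" by (cases p)
      have "f p \<noteq> 0 \<longleftrightarrow> (t - m * s = c0 \<or> s = m0 + m1 * (t - m * s))"
        using H[rule_format, of "(s, t - m * s)"] p by simp
      moreover have "(t - m * s = c0) \<longleftrightarrow> aff (-m,1,-c0) p = 0" using p by (auto simp: algebra_simps)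
      moreover have "(s = m0 + m1 * (t - m * s)) \<longleftrightarrow> aff (1 + m1*m, -m1, -m0) p = 0"
        using p by (auto simp: algebra_simps)
      ultimately show "f p \<noteq> 0 \<longleftrightarrow> (aff (-m,1,-c0) p = 0 \<or> aff (1 + m1*m, -m1, -m0) p = 0)" by blast
    qed
    moreover have "(-m) * (-m1) - 1 * (1 + m1 * m) \<noteq> (0::'a)" by (simp add: algebra_simps)
    ultimately show ?thesis by blast
  qed
qed

end

definition vsc :: "'a::comm_ring_1 \<Rightarrow> 'a v3 \<Rightarrow> 'a v3" where
  "vsc c v = (case v of (x,y,z) \<Rightarrow> (c*x, c*y, c*z))"

lemma vsc_simp[simp]: "vsc c (x,y,z) = (c*x, c*y, c*z)" by (simp add: vsc_def)

lemma lf_vsc: "lf l (vsc c v) = c * lf l v"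
  by (cases l, cases v) (simp add: algebra_simps)

lemma vsc_vsc: "vsc c (vsc d v) = vsc (c*d) v" by (cases v) (simp add: algebra_simps)
lemma vsc_1[simp]: "vsc 1 v = v" by (cases v) simp

lemma heval_vsc: "heval d F (vsc c v) = c^d * heval d F v"
  by (cases v) (simp add: heval_hom)

lemma proj_class_alt: "proj_class v = {vsc c v | c. c \<noteq> 0}"
  by (cases v) (simp add: proj_class_def)

lemma proj_class_self: "v \<in> proj_class (v::'a::field v3)"
  unfolding proj_class_alt by (auto intro: exI[of _ 1])

lemma proj_class_vsc: "c \<noteq> 0 \<Longrightarrow> proj_class (vsc c v) = proj_class (v::'a::field v3)"
proof -
  assume c: "c \<noteq> 0"
  show ?thesis
  proof (intro set_eqI iffI)
    fix x assume "x \<in> proj_class (vsc c v)"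
    then obtain e where e: "e \<noteq> 0" "x = vsc e (vsc c v)" by (auto simp: proj_class_alt)
    hence "x = vsc (e*c) v" "e * c \<noteq> 0" using c by (auto simp: vsc_vsc)
    thus "x \<in> proj_class v" unfolding proj_class_alt by blast
  next
    fix x assume "x \<in> proj_class v"
    then obtain e where e: "e \<noteq> 0" "x = vsc e v" by (auto simp: proj_class_alt)
    hence "x = vsc (e/c) (vsc c v)" "e / c \<noteq> 0" using c by (auto simp: vsc_vsc)
    thus "x \<in> proj_class (vsc c v)" unfolding proj_class_alt by blast
  qed
qed

lemma vsc_eq_0_iff: "vsc c v = (0,0,0) \<longleftrightarrow> c = 0 \<or> v = (0::'a::field,0,0)"
  by (cases v) auto

lemma curve_class_iff:
  assumes "v \<noteq> (0,0,0)"
  shows "proj_class v \<in> curve_pts d F \<longleftrightarrow> heval d F v = (0::'a::field)"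
proof -
  have pp: "proj_class v \<in> proj_pts" unfolding proj_pts_def using assms by blast
  show ?thesis
  proof
    assume "proj_class v \<in> curve_pts d F"
    thus "heval d F v = 0" using proj_class_self[of v] by (auto simp: curve_pts_def)
  next
    assume h: "heval d F v = 0"
    have "\<forall>w\<in>proj_class v. heval d F w = 0" using h by (auto simp: proj_class_alt heval_vsc)
    thus "proj_class v \<in> curve_pts d F" using pp by (simp add: curve_pts_def)
  qed
qed

lemma line_class_iff:
  assumes "v \<noteq> (0,0,0)"
  shows "proj_class v \<in> line_pts l \<longleftrightarrow> lf l (v::'a::field v3) = 0"
proof -
  have pp: "proj_class v \<in> proj_pts" unfolding proj_pts_def using assms by blast
  obtain a b c where l: "l = (a,b,c)" by (cases l)
  have "proj_class v \<in> line_pts l \<longleftrightarrow> (\<forall>w\<in>proj_class v. lf l w = 0)"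
    using pp by (auto simp: line_pts_def l)
  also have "\<dots> \<longleftrightarrow> lf l v = 0"
  proof
    assume "\<forall>w\<in>proj_class v. lf l w = 0" thus "lf l v = 0" using proj_class_self[of v] by blast
  next
    assume "lf l v = 0" thus "\<forall>w\<in>proj_class v. lf l w = 0" by (auto simp: proj_class_alt lf_vsc)
  qed
  finally show ?thesis .
qed

lemma proj_pts_E: "P \<in> proj_pts \<Longrightarrow> (\<And>v. v \<noteq> (0,0,0) \<Longrightarrow> P = proj_class v \<Longrightarrow> thesis) \<Longrightarrow> thesis"
  by (auto simp: proj_pts_def)

lemma line_pts_subset: "line_pts l \<subseteq> proj_pts"
  by (cases l) (auto simp: line_pts_def)

lemma curve_pts_subset: "curve_pts d F \<subseteq> proj_pts"
  by (auto simp: curve_pts_def)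

lemma line_pts_vsc: "c \<noteq> 0 \<Longrightarrow> line_pts (vsc c l) = line_pts (l::'a::field v3)"
proof -
  assume c: "c \<noteq> 0"
  have "P \<in> line_pts (vsc c l) \<longleftrightarrow> P \<in> line_pts l" for P
  proof (cases "P \<in> proj_pts")
    case True
    then obtain v where v: "v \<noteq> (0,0,0)" "P = proj_class v" by (rule proj_pts_E)
    have "lf (vsc c l) v = c * lf l v" by (cases l, cases v) (simp add: algebra_simps)
    thus ?thesis using v c line_class_iff[OF v(1)] by simp
  next
    case False thus ?thesis using line_pts_subset by blast
  qed
  thus ?thesis by blast
qed

lemma line_pts_eqI: "(\<And>v. lf l v = 0 \<longleftrightarrow> lf m v = 0) \<Longrightarrow> line_pts l = line_pts (m::'a::field v3)"
proof -
  assume H: "\<And>v. lf l v = 0 \<longleftrightarrow> lf m v = 0"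
  have "P \<in> line_pts l \<longleftrightarrow> P \<in> line_pts m" for P
  proof (cases "P \<in> proj_pts")
    case True
    then obtain v where v: "v \<noteq> (0,0,0)" "P = proj_class v" by (rule proj_pts_E)
    thus ?thesis using H[of v] line_class_iff[OF v(1)] by simp
  next
    case False thus ?thesis using line_pts_subset by blast
  qed
  thus ?thesis by blast
qed

definition lin3 :: "'a::comm_ring_1 v3 \<Rightarrow> 'a v3 \<Rightarrow> 'a v3 \<Rightarrow> 'a v3 \<Rightarrow> 'a v3" where
  "lin3 A B C w = (case A of (a1,a2,a3) \<Rightarrow> case B of (b1,b2,b3) \<Rightarrow> case C of (c1,c2,c3) \<Rightarrow>
      (lf (a1,b1,c1) w, lf (a2,b2,c2) w, lf (a3,b3,c3) w))"

definition Dm :: "'a::comm_ring_1 v3 \<Rightarrow> 'a v3 \<Rightarrow> 'a v3 \<Rightarrow> 'a v3 \<Rightarrow> 'a v3" where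
  "Dm A B C l = (lf l A, lf l B, lf l C)"

lemma lf_lin3: "lf l (lin3 A B C w) = lf (Dm A B C l) w"
  by (cases l, cases A, cases B, cases C, cases w) (simp add: lin3_def Dm_def algebra_simps)

lemma lin3_vsc: "lin3 A B C (vsc c w) = vsc c (lin3 A B C w)"
  by (cases A, cases B, cases C, cases w) (simp add: lin3_def algebra_simps)

lemma lin3_diff: "lin3 A B C (x1 - y1, x2 - y2, x3 - y3) = (case lin3 A B C (x1,x2,x3) of (a,b,c) \<Rightarrow> case lin3 A B C (y1,y2,y3) of (a',b',c') \<Rightarrow> (a - a', b - b', c - c'))"
  by (cases A, cases B, cases C) (simp add: lin3_def algebra_simps)

lemma basis_exists:
  fixes l :: "'a::field v3"
  assumes "l \<noteq> (0,0,0)"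
  shows "\<exists>A B C. lf l A = 0 \<and> lf l B = 0 \<and> lf l C = 1 \<and> (\<forall>w. lin3 A B C w = (0,0,0) \<longrightarrow> w = (0,0,0))"
proof -
  obtain a b c where l: "l = (a,b,c)" by (cases l)
  show ?thesis
  proof (cases "a = 0")
    case False
    have "\<forall>w. lin3 (-b, a, 0) (-c, 0, a) (1/a, 0, 0) w = (0,0,0) \<longrightarrow> w = (0,0,0)"
    proof (intro allI impI)
      fix w :: "'a v3" assume h: "lin3 (-b, a, 0) (-c, 0, a) (1/a, 0, 0) w = (0,0,0)"
      obtain s t u where w: "w = (s,t,u)" by (cases w)
      have "s = 0" "t = 0" using h False by (auto simp: w lin3_def)
      hence "u = 0" using h False by (simp add: w lin3_def)
      thus "w = (0,0,0)" using \<open>s = 0\<close> \<open>t = 0\<close> w by simp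
    qed
    moreover have "lf l (-b, a, 0) = 0" "lf l (-c, 0, a) = 0" "lf l (1/a, 0, 0) = 1"
      using False by (auto simp: l algebra_simps)
    ultimately show ?thesis by blast
  next
    case a: True
    show ?thesis
    proof (cases "b = 0")
      case False
      have "\<forall>w. lin3 (b, -a, 0) (0, -c, b) (0, 1/b, 0) w = (0,0,0) \<longrightarrow> w = (0,0,0)"
      proof (intro allI impI)
        fix w :: "'a v3" assume h: "lin3 (b, -a, 0) (0, -c, b) (0, 1/b, 0) w = (0,0,0)"
        obtain s t u where w: "w = (s,t,u)" by (cases w)
        have "s = 0" "t = 0" using h False by (auto simp: w lin3_def)
        hence "u = 0" using h False a by (simp add: w lin3_def)
        thus "w = (0,0,0)" using \<open>s = 0\<close> \<open>t = 0\<close> w by simp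
      qed
      moreover have "lf l (b, -a, 0) = 0" "lf l (0, -c, b) = 0" "lf l (0, 1/b, 0) = 1"
        using False by (auto simp: l algebra_simps)
      ultimately show ?thesis by blast
    next
      case b: True
      hence c: "c \<noteq> 0" using a assms l by auto
      have "\<forall>w. lin3 (c, 0, -a) (0, c, -b) (0, 0, 1/c) w = (0,0,0) \<longrightarrow> w = (0,0,0)"
      proof (intro allI impI)
        fix w :: "'a v3" assume h: "lin3 (c, 0, -a) (0, c, -b) (0, 0, 1/c) w = (0,0,0)"
        obtain s t u where w: "w = (s,t,u)" by (cases w)
        have "s = 0" "t = 0" using h c by (auto simp: w lin3_def)
        hence "u = 0" using h c a b by (simp add: w lin3_def)
        thus "w = (0,0,0)" using \<open>s = 0\<close> \<open>t = 0\<close> w by simp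
      qed
      moreover have "lf l (c, 0, -a) = 0" "lf l (0, c, -b) = 0" "lf l (0, 0, 1/c) = 1"
        using c a b by (auto simp: l algebra_simps)
      ultimately show ?thesis by blast
    qed
  qed
qed

lemma aff_line_card:
  fixes a1 a2 a3 :: "'a::{finite,field}"
  assumes "(a1,a2) \<noteq> (0,0)"
  shows "card {p. aff (a1,a2,a3) p = 0} = card (UNIV::'a set)"
proof (cases "a2 = 0")
  case False
  have "{p. aff (a1,a2,a3) p = 0} = (\<lambda>s. (s, - (a1*s + a3) / a2)) ` UNIV"
  proof (intro set_eqI iffI)
    fix p :: "'a \<times> 'a" assume "p \<in> {p. aff (a1,a2,a3) p = 0}"
    then obtain s t where p: "p = (s,t)" "a1 * s + a2 * t + a3 = 0" by (cases p) auto
    hence "a2 * t = - (a1*s + a3)" by (simp add: eq_neg_iff_add_eq_0 algebra_simps)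
    hence "t = - (a1 * s + a3) / a2" using False by (simp add: field_simps)
    thus "p \<in> (\<lambda>s. (s, - (a1*s + a3) / a2)) ` UNIV" using p by auto
  next
    fix p :: "'a \<times> 'a" assume "p \<in> (\<lambda>s. (s, - (a1*s + a3) / a2)) ` UNIV"
    then obtain s where p: "p = (s, - (a1*s + a3) / a2)" by auto
    have "a1 * s + a2 * (- (a1 * s + a3) / a2) + a3 = 0" using False by (simp add: field_simps)
    thus "p \<in> {p. aff (a1,a2,a3) p = 0}" using p by simp
  qed
  thus ?thesis by (simp add: card_image inj_on_def)
next
  case True
  hence a1: "a1 \<noteq> 0" using assms by auto
  have "{p. aff (a1,a2,a3) p = 0} = (\<lambda>t. (- (a2*t + a3) / a1, t)) ` UNIV"
  proof (intro set_eqI iffI)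
    fix p :: "'a \<times> 'a" assume "p \<in> {p. aff (a1,a2,a3) p = 0}"
    then obtain s t where p: "p = (s,t)" "a1 * s + a2 * t + a3 = 0" by (cases p) auto
    hence "a1 * s = - (a2*t + a3)" by (simp add: eq_neg_iff_add_eq_0 algebra_simps)
    hence "s = - (a2 * t + a3) / a1" using a1 by (simp add: field_simps)
    thus "p \<in> (\<lambda>t. (- (a2*t + a3) / a1, t)) ` UNIV" using p by auto
  next
    fix p :: "'a \<times> 'a" assume "p \<in> (\<lambda>t. (- (a2*t + a3) / a1, t)) ` UNIV"
    then obtain t where p: "p = (- (a2*t + a3) / a1, t)" by auto
    have "a1 * (- (a2 * t + a3) / a1) + a2 * t + a3 = 0" using a1 by (simp add: field_simps)
    thus "p \<in> {p. aff (a1,a2,a3) p = 0}" using p by simp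
  qed
  thus ?thesis by (simp add: card_image inj_on_def)
qed

lemma aff_two_points_prop:
  fixes a1 a2 a3 b1 b2 b3 :: "'a::field"
  assumes a: "(a1,a2) \<noteq> (0,0)" and b: "(b1,b2) \<noteq> (0,0)"
    and p: "aff (a1,a2,a3) p = 0" "aff (b1,b2,b3) p = 0"
    and p': "aff (a1,a2,a3) p' = 0" "aff (b1,b2,b3) p' = 0" and ne: "p \<noteq> p'"
  shows "\<exists>lam. lam \<noteq> 0 \<and> b1 = lam * a1 \<and> b2 = lam * a2 \<and> b3 = lam * a3"
proof -
  obtain s t s' t' where pp: "p = (s,t)" "p' = (s',t')" by (cases p, cases p')
  define w1 where "w1 = s' - s"
  define w2 where "w2 = t' - t"
  have w: "(w1,w2) \<noteq> (0,0)" using ne pp by (auto simp: w1_def w2_def)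
  have pa: "a1*s + a2*t = -a3" "a1*s'+a2*t' = -a3" "b1*s+b2*t = -b3" "b1*s'+b2*t' = -b3"
    using p p' pp by (simp_all add: eq_neg_iff_add_eq_0 algebra_simps)
  have "a1 * w1 + a2 * w2 = (a1*s'+a2*t') - (a1*s+a2*t)" by (simp add: w1_def w2_def algebra_simps)
  hence e1: "a1 * w1 + a2 * w2 = 0" using pa by simp
  have "b1 * w1 + b2 * w2 = (b1*s'+b2*t') - (b1*s+b2*t)" by (simp add: w1_def w2_def algebra_simps)
  hence e2: "b1 * w1 + b2 * w2 = 0" using pa by simp
  have det: "a1 * b2 - a2 * b1 = 0"
  proof (cases "w1 = 0")
    case True
    hence "w2 \<noteq> 0" using w by auto
    hence "a2 = 0" "b2 = 0" using e1 e2 True by auto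
    thus ?thesis by simp
  next
    case False
    have x1: "a1 * w1 = - (a2 * w2)" and x2: "b1 * w1 = - (b2 * w2)" using e1 e2 by (simp_all add: eq_neg_iff_add_eq_0)
    have "(a1 * b2 - a2 * b1) * w1 = (a1 * w1) * b2 - a2 * (b1 * w1)" by (simp add: algebra_simps)
    also have "\<dots> = 0" unfolding x1 x2 by (simp add: algebra_simps)
    finally show ?thesis using False by simp
  qed
  define lam where "lam = (if a1 \<noteq> 0 then b1 / a1 else b2 / a2)"
  have l1: "b1 = lam * a1" and l2: "b2 = lam * a2"
  proof -
    show "b1 = lam * a1"
    proof (cases "a1 = 0")
      case True
      hence "a2 \<noteq> 0" using a by auto
      hence "b1 = 0" using det True by simp
      thus ?thesis using True by simp
    qed (simp add: lam_def)
    show "b2 = lam * a2"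
    proof (cases "a1 = 0")
      case True
      hence "a2 \<noteq> 0" using a by auto
      thus ?thesis using True by (simp add: lam_def)
    next
      case False
      have "b2 * a1 = b1 * a2" using det by (simp add: algebra_simps)
      thus ?thesis using False by (simp add: lam_def field_simps)
    qed
  qed
  have "lam \<noteq> 0" using b l1 l2 by auto
  moreover have "b3 = lam * a3"
  proof -
    have "b3 = - (b1 * s + b2 * t)" using p(2) pp by (simp add: eq_neg_iff_add_eq_0 algebra_simps)
    also have "\<dots> = lam * (- (a1 * s + a2 * t))" using l1 l2 by (simp add: algebra_simps)
    also have "- (a1 * s + a2 * t) = a3" using p(1) pp by (simp add: neg_eq_iff_add_eq_0 algebra_simps)
    finally show ?thesis .
  qed
  ultimately show ?thesis using l1 l2 by blast
qed

lemma lf_diff: "lf l (s - s', t - t', u - u') = lf l (s,t,u) - lf l (s',t',u')"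
  by (cases l) (simp add: algebra_simps)

lemma lin3_alt: "lin3 (a1,a2,a3) (b1,b2,b3) (c1,c2,c3) w = (lf (a1,b1,c1) w, lf (a2,b2,c2) w, lf (a3,b3,c3) w)"
  by (simp add: lin3_def)

lemma sum_split0: "(\<Sum>u\<in>UNIV. h u) = h 0 + (\<Sum>u\<in>UNIV - {0}. h (u::'a::{finite,field}))"
  by (metis add.commute finite_UNIV insert_UNIV sum.insert_remove sum.remove UNIV_I)

lemma sum_nonzero_const: "(\<Sum>u\<in>UNIV - {0::'a::{finite,field}}. X) = - (X::'a)"
proof -
  have "(\<Sum>u\<in>UNIV - {0::'a}. X) = of_nat (card (UNIV::'a set) - 1) * X" by (simp add: card_Diff_subset)
  also have "\<dots> = (of_nat (card (UNIV::'a set)) - 1) * X" using ff_card_ge2[where 'a='a] by (simp add: of_nat_diff)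
  finally show ?thesis using ff_char[where 'a='a] by simp
qed

lemma scale_sum: "(u::'a::{finite,field}) \<noteq> 0 \<Longrightarrow> (\<Sum>p\<in>UNIV. g (u * fst p, u * snd p)) = (\<Sum>p\<in>UNIV. g p)"
  by (rule sum.reindex_bij_witness[where i="\<lambda>p. (fst p / u, snd p / u)" and j="\<lambda>p. (u * fst p, u * snd p)"]) auto

lemma sum_v3_split: "(\<Sum>w\<in>UNIV. G w) = (\<Sum>u\<in>UNIV. \<Sum>p\<in>UNIV. G (fst p, snd p, u))"
  for G :: "('a::finite) v3 \<Rightarrow> 'b::comm_monoid_add"
proof -
  have "(\<Sum>w\<in>UNIV. G w) = (\<Sum>s\<in>UNIV. \<Sum>t\<in>UNIV. \<Sum>u\<in>UNIV. G (s,t,u))" by (simp add: sum_UNIV3)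
  also have "\<dots> = (\<Sum>s\<in>UNIV. \<Sum>u\<in>UNIV. \<Sum>t\<in>UNIV. G (s,t,u))" by (intro sum.cong refl sum.swap)
  also have "\<dots> = (\<Sum>u\<in>UNIV. \<Sum>s\<in>UNIV. \<Sum>t\<in>UNIV. G (s,t,u))" by (rule sum.swap)
  also have "\<dots> = (\<Sum>u\<in>UNIV. \<Sum>p\<in>UNIV. G (fst p, snd p, u))" by (simp add: sum_UNIV2)
  finally show ?thesis .
qed

lemma lf_vsc_left: "lf (vsc c m) v = c * lf m v"
  by (cases m, cases v) (simp add: algebra_simps)

lemma Dm_vsc: "Dm A B C (vsc c m) = vsc c (Dm A B C m)"
  by (simp add: Dm_def lf_vsc_left)

locale PW =
  fixes F :: "('a::{finite,field}) tpoly" and l0 A B C :: "'a v3"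
  assumes q7: "card (UNIV::'a set) \<ge> 7"
  and LZ: "line_pts l0 \<subseteq> Zset (card (UNIV::'a set) - 1) F"
  and l0A: "lf l0 A = 0" and l0B: "lf l0 B = 0" and l0C: "lf l0 C = 1"
  and ker: "\<And>w. lin3 A B C w = (0,0,0) \<Longrightarrow> w = (0,0,0)"
  and ccnt: "card (curve_pts (card (UNIV::'a set) - 1) F) = (card (UNIV::'a set) - 1)^2"
begin

definition Tm :: "'a v3 \<Rightarrow> 'a v3" where "Tm w = lin3 A B C w"
definition Phi :: "'a v3 \<Rightarrow> 'a" where "Phi w = heval (card (UNIV::'a set) - 1) F (Tm w)"
definition fa :: "'a \<times> 'a \<Rightarrow> 'a" where "fa p = Phi (fst p, snd p, 1)"

lemma lf_Tm: "lf l (Tm w) = lf (Dm A B C l) w" by (simp add: Tm_def lf_lin3)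

lemma Dm_l0: "Dm A B C l0 = (0,0,1)" by (simp add: Dm_def l0A l0B l0C)

lemma lf_l0_Tm: "lf l0 (Tm (s,t,u)) = u" by (simp add: lf_Tm Dm_l0)

lemma Tm_vsc: "Tm (vsc c w) = vsc c (Tm w)" by (simp add: Tm_def lin3_vsc)

lemma Tm_inj: "inj Tm"
proof (rule injI)
  fix v w :: "'a v3" assume h: "Tm v = Tm w"
  obtain s t u where v: "v = (s,t,u)" by (cases v)
  obtain s' t' u' where w: "w = (s',t',u')" by (cases w)
  obtain a1 a2 a3 where A: "A = (a1,a2,a3)" by (cases A)
  obtain b1 b2 b3 where B: "B = (b1,b2,b3)" by (cases B)
  obtain c1 c2 c3 where C: "C = (c1,c2,c3)" by (cases C)
  have h': "lin3 A B C (s,t,u) = lin3 A B C (s',t',u')" using h v w by (simp add: Tm_def)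
  have "lin3 A B C (s - s', t - t', u - u') = (0,0,0)"
    using h' unfolding A B C lin3_alt lf_diff by simp
  hence "(s - s', t - t', u - u') = (0,0,0)" by (rule ker)
  thus "v = w" using v w by simp
qed

lemma Tm_surj: "surj Tm" by (rule finite_UNIV_inj_surj[OF _ Tm_inj]) simp

lemma Tm_nz: "w \<noteq> (0,0,0) \<Longrightarrow> Tm w \<noteq> (0,0,0)"
proof
  assume "w \<noteq> (0,0,0)" "Tm w = (0,0,0)"
  hence "lin3 A B C w = (0,0,0)" by (simp add: Tm_def)
  hence "w = (0,0,0)" by (rule ker)
  thus False using \<open>w \<noteq> (0,0,0)\<close> by simp
qed

lemma Phi_PF: "Phi \<in> PF (card (UNIV::'a set) - 1)"
proof -
  obtain a1 a2 a3 where A: "A = (a1,a2,a3)" by (cases A)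
  obtain b1 b2 b3 where B: "B = (b1,b2,b3)" by (cases B)
  obtain c1 c2 c3 where C: "C = (c1,c2,c3)" by (cases C)
  have "(\<lambda>w. heval (card (UNIV::'a set) - 1) F (lf (a1,b1,c1) w, lf (a2,b2,c2) w, lf (a3,b3,c3) w)) \<in> PF (card (UNIV::'a set) - 1)"
    by (rule PF_comp[OF heval_PF])
  moreover have e: "\<And>w. lin3 A B C w = (lf (a1,b1,c1) w, lf (a2,b2,c2) w, lf (a3,b3,c3) w)"
    by (simp add: A B C lin3_alt)
  have "Phi = (\<lambda>w. heval (card (UNIV::'a set) - 1) F (lf (a1,b1,c1) w, lf (a2,b2,c2) w, lf (a3,b3,c3) w))"
    by (simp add: fun_eq_iff Phi_def Tm_def e)
  ultimately show ?thesis by simp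
qed

lemma Phi_hom: "Phi (vsc c w) = c^(card (UNIV::'a set) - 1) * Phi w"
  by (simp add: Phi_def Tm_vsc heval_vsc)

lemma Phi_nz_inf: "(d1,d2) \<noteq> (0,0) \<Longrightarrow> Phi (d1,d2,0) \<noteq> 0"
proof -
  assume "(d1,d2) \<noteq> (0,0)"
  hence v: "Tm (d1,d2,0) \<noteq> (0,0,0)" by (intro Tm_nz) auto
  have "lf l0 (Tm (d1,d2,0)) = 0" by (simp add: lf_l0_Tm)
  hence "proj_class (Tm (d1,d2,0)) \<in> line_pts l0" using line_class_iff[OF v] by simp
  hence "proj_class (Tm (d1,d2,0)) \<notin> curve_pts (card (UNIV::'a set) - 1) F" using LZ by (auto simp: Zset_def)
  thus ?thesis using curve_class_iff[OF v] by (simp add: Phi_def)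
qed

lemma fa_mom:
  assumes ij: "i + j \<le> card (UNIV::'a set) - 2"
  shows "(\<Sum>p\<in>UNIV. fa p * aff a p ^ i * aff b p ^ j) = 0"
proof -
  let ?d = "card (UNIV::'a set) - 1"
  let ?e = "?d - i - j"
  have e1: "?e \<ge> 1" using ij q7 by linarith
  define G where "G w = lf a w ^ i * (lf b w ^ j * (lf (0,0,1) w ^ ?e * Phi w))" for w
  have "G \<in> PF (?d + ?e + j + i)" unfolding G_def by (intro PF_pow_lin Phi_PF)
  moreover have "?d + ?e + j + i < 3 * (card (UNIV::'a set) - 1)" using ij q7 by linarith
  ultimately have S0: "(\<Sum>w\<in>UNIV. G w) = 0" by (rule PF_sum_zero)
  define X where "X = (\<Sum>p\<in>UNIV. fa p * aff a p ^ i * aff b p ^ j)"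
  have G0: "(\<Sum>p\<in>UNIV. G (fst p, snd p, 0)) = 0"
    using e1 by (intro sum.neutral) (simp add: G_def power_0_left)
  have Gu: "(\<Sum>p\<in>UNIV. G (fst p, snd p, u)) = X" if u: "u \<noteq> 0" for u
  proof -
    have "(\<Sum>p\<in>UNIV. G (fst p, snd p, u)) = (\<Sum>p\<in>UNIV. G (u * fst p, u * snd p, u))"
      using scale_sum[OF u, of "\<lambda>p. G (fst p, snd p, u)"] by simp
    also have "\<dots> = X" unfolding X_def
    proof (intro sum.cong refl)
      fix p :: "'a \<times> 'a"
      obtain s t where p: "p = (s,t)" by (cases p)
      have v: "(u * s, u * t, u) = vsc u (s,t,1)" by simp
      have ud: "u ^ ?d = 1" using ff_fermat[OF u] by simp
      have "G (u * s, u * t, u) = (u * aff a p) ^ i * ((u * aff b p) ^ j * (u ^ ?e * (u ^ ?d * fa p)))"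
        unfolding G_def v Phi_hom lf_vsc by (simp add: p fa_def aff_def)
      also have "\<dots> = u ^ (i + j + ?e) * (fa p * aff a p ^ i * aff b p ^ j)"
        using ud by (simp add: power_mult_distrib power_add algebra_simps)
      also have "i + j + ?e = ?d" using ij q7 by linarith
      finally show "G (u * fst p, u * snd p, u) = fa p * aff a p ^ i * aff b p ^ j" using ud p by simp
    qed
    finally show ?thesis .
  qed
  have "(\<Sum>w\<in>UNIV. G w) = (\<Sum>u\<in>UNIV. \<Sum>p\<in>UNIV. G (fst p, snd p, u))" by (rule sum_v3_split)
  also have "\<dots> = (\<Sum>p\<in>UNIV. G (fst p, snd p, 0)) + (\<Sum>u\<in>UNIV - {0}. \<Sum>p\<in>UNIV. G (fst p, snd p, u))"
    by (rule sum_split0)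
  also have "(\<Sum>u\<in>UNIV - {0}. \<Sum>p\<in>UNIV. G (fst p, snd p, u)) = (\<Sum>u\<in>UNIV - {0::'a}. X)"
    by (intro sum.cong refl) (simp add: Gu)
  also have "(\<Sum>p\<in>UNIV. G (fst p, snd p, 0)) = 0" by (rule G0)
  also have "(\<Sum>u\<in>UNIV - {0::'a}. X) = - X" by (rule sum_nonzero_const)
  finally show ?thesis using S0 X_def by simp
qed

lemma fa_lsum:
  assumes d: "(d1,d2) \<noteq> (0,0)"
  shows "(\<Sum>t\<in>UNIV. fa (s0 + t*d1, t0 + t*d2)) \<noteq> 0"
proof -
  let ?d = "card (UNIV::'a set) - 1"
  define Psi where "Psi w = Phi (lf (d1,s0,0) w, lf (d2,t0,0) w, lf (0,1,0) w)" for w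
  define H where "H w = lf (0,0,1) w ^ ?d * Psi w" for w
  have "Psi \<in> PF ?d" unfolding Psi_def[abs_def] by (rule PF_comp[OF Phi_PF])
  hence "H \<in> PF (?d + ?d)" unfolding H_def[abs_def] by (rule PF_pow_lin)
  moreover have "?d + ?d < 3 * (card (UNIV::'a set) - 1)" using q7 by linarith
  ultimately have "(\<Sum>w\<in>UNIV. H w) = 0" by (rule PF_sum_zero)
  moreover have "(\<Sum>w\<in>UNIV. H w) = (\<Sum>u\<in>UNIV. \<Sum>p\<in>UNIV. u ^ ?d * Psi (fst p, snd p, u))"
    unfolding H_def by (subst sum_v3_split) simp
  moreover have "\<dots> = (\<Sum>u\<in>UNIV. u ^ ?d) * (\<Sum>p\<in>UNIV. Psi (fst p, snd p, 0))"
    by (simp add: Psi_def sum_distrib_left[symmetric] sum_distrib_right[symmetric])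
  ultimately have Y0: "(\<Sum>p\<in>UNIV. Psi (fst p, snd p, 0)) = 0" using ff_sum_pow_qm1[where 'a='a] by simp
  define S where "S = (\<Sum>t\<in>UNIV. fa (s0 + t*d1, t0 + t*d2))"
  have "(\<Sum>p\<in>UNIV. Psi (fst p, snd p, 0)) = (\<Sum>a\<in>UNIV. \<Sum>b\<in>UNIV. Phi (a*d1 + b*s0, a*d2 + b*t0, b))"
    by (simp add: sum_UNIV2 Psi_def mult.commute)
  also have "\<dots> = (\<Sum>b\<in>UNIV. \<Sum>a\<in>UNIV. Phi (a*d1 + b*s0, a*d2 + b*t0, b))"
    by (rule sum.swap)
  also have "\<dots> = (\<Sum>a\<in>UNIV. Phi (a*d1 + 0*s0, a*d2 + 0*t0, 0)) + (\<Sum>b\<in>UNIV - {0}. \<Sum>a\<in>UNIV. Phi (a*d1 + b*s0, a*d2 + b*t0, b))"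
    by (rule sum_split0)
  also have "(\<Sum>a\<in>UNIV. Phi (a*d1 + 0*s0, a*d2 + 0*t0, 0)) = - Phi (d1,d2,0)"
  proof -
    have "(\<Sum>a\<in>UNIV. Phi (a*d1 + 0*s0, a*d2 + 0*t0, 0)) = (\<Sum>a\<in>UNIV. a ^ ?d * Phi (d1,d2,0))"
    proof (intro sum.cong refl)
      fix a :: 'a
      have "(a*d1 + 0*s0, a*d2 + 0*t0, 0) = vsc a (d1,d2,0)" by simp
      thus "Phi (a*d1 + 0*s0, a*d2 + 0*t0, 0) = a ^ ?d * Phi (d1,d2,0)" by (simp only: Phi_hom)
    qed
    also have "\<dots> = - Phi (d1,d2,0)" using ff_sum_pow_qm1[where 'a='a] by (simp add: sum_distrib_right[symmetric])
    finally show ?thesis .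
  qed
  also have "(\<Sum>b\<in>UNIV - {0}. \<Sum>a\<in>UNIV. Phi (a*d1 + b*s0, a*d2 + b*t0, b)) = (\<Sum>b\<in>UNIV - {0::'a}. S)"
  proof (intro sum.cong refl)
    fix b :: 'a assume "b \<in> UNIV - {0}"
    hence b: "b \<noteq> 0" by simp
    have "(\<Sum>a\<in>UNIV. Phi (a*d1 + b*s0, a*d2 + b*t0, b)) = (\<Sum>t\<in>UNIV. Phi ((b*t)*d1 + b*s0, (b*t)*d2 + b*t0, b))"
      using b by (intro sum.reindex_bij_witness[where j="\<lambda>a. a / b" and i="\<lambda>t. b * t"]) (simp_all add: b)
    also have "\<dots> = S" unfolding S_def
    proof (intro sum.cong refl)
      fix t :: 'a
      have "((b*t)*d1 + b*s0, (b*t)*d2 + b*t0, b) = vsc b (s0 + t*d1, t0 + t*d2, 1)" by (simp add: algebra_simps)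
      hence "Phi ((b*t)*d1 + b*s0, (b*t)*d2 + b*t0, b) = b ^ ?d * Phi (s0 + t*d1, t0 + t*d2, 1)" by (simp only: Phi_hom)
      thus "Phi ((b*t)*d1 + b*s0, (b*t)*d2 + b*t0, b) = fa (s0 + t*d1, t0 + t*d2)"
        using ff_fermat[OF b] by (simp add: fa_def)
    qed
    finally show "(\<Sum>a\<in>UNIV. Phi (a*d1 + b*s0, a*d2 + b*t0, b)) = S" .
  qed
  also have "(\<Sum>b\<in>UNIV - {0::'a}. S) = - S" by (rule sum_nonzero_const)
  finally have "- Phi (d1,d2,0) + - S = 0" using Y0 by simp
  hence "S = - Phi (d1,d2,0)" by (metis add_eq_0_iff2 minus_minus)
  thus ?thesis using Phi_nz_inf[OF d] S_def by simp
qed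

abbreviation "gp p \<equiv> proj_class (Tm (fst p, snd p, 1))"

lemma gp_nz: "Tm (s, t, 1) \<noteq> (0,0,0)" by (intro Tm_nz) simp

lemma heval_Tm1: "heval (card (UNIV::'a set) - 1) F (Tm (fst p, snd p, 1)) = fa p"
  by (simp add: fa_def Phi_def)

lemma Tm_decomp:
  obtains s t u where "v = Tm (s,t,u)"
  using Tm_surj by (metis surj_def prod_cases3)

lemma Tm_u: "u \<noteq> 0 \<Longrightarrow> Tm (s,t,u) = vsc u (Tm (s/u, t/u, 1))"
proof -
  assume u: "u \<noteq> 0"
  have "(s,t,u) = vsc u (s/u, t/u, 1)" using u by simp
  thus ?thesis by (metis Tm_vsc)
qed

lemma curve_eq: "curve_pts (card (UNIV::'a set) - 1) F = gp ` {p. fa p = 0}"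
proof (intro set_eqI iffI)
  fix P assume P: "P \<in> curve_pts (card (UNIV::'a set) - 1) F"
  hence "P \<in> proj_pts" using curve_pts_subset by blast
  then obtain v where v: "v \<noteq> (0,0,0)" "P = proj_class v" by (rule proj_pts_E)
  have hv: "heval (card (UNIV::'a set) - 1) F v = 0" using P v curve_class_iff[OF v(1)] by simp
  obtain s t u where w: "v = Tm (s,t,u)" by (rule Tm_decomp)
  have u: "u \<noteq> 0"
  proof
    assume "u = 0"
    hence "lf l0 v = 0" using w by (simp add: lf_l0_Tm)
    hence "P \<in> line_pts l0" using v line_class_iff[OF v(1)] by simp
    thus False using P LZ by (auto simp: Zset_def)
  qed
  have v2: "v = vsc u (Tm (s/u, t/u, 1))" using w Tm_u[OF u] by simp
  have "P = gp (s/u, t/u)" using v(2) v2 proj_class_vsc[OF u] by simp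
  moreover have "fa (s/u, t/u) = 0"
    using hv v2 u heval_Tm1[of "(s/u, t/u)"] by (simp add: heval_vsc)
  ultimately show "P \<in> gp ` {p. fa p = 0}" by blast
next
  fix P assume "P \<in> gp ` {p. fa p = 0}"
  then obtain p where p: "fa p = 0" "P = gp p" by blast
  thus "P \<in> curve_pts (card (UNIV::'a set) - 1) F"
    using curve_class_iff[OF gp_nz] heval_Tm1[of p] by simp
qed

lemma gp_inj: "inj gp"
proof (rule injI)
  fix p p' :: "'a \<times> 'a" assume h: "gp p = gp p'"
  have "Tm (fst p', snd p', 1) \<in> gp p" using h proj_class_self by simp
  then obtain c where c: "c \<noteq> 0" "Tm (fst p', snd p', 1) = vsc c (Tm (fst p, snd p, 1))"
    by (auto simp: proj_class_alt)
  hence "Tm (fst p', snd p', 1) = Tm (vsc c (fst p, snd p, 1))" by (simp only: Tm_vsc)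
  hence "(fst p', snd p', 1) = vsc c (fst p, snd p, 1)" using Tm_inj by (meson injD)
  thus "p = p'" by (simp add: prod_eq_iff)
qed

lemma fa_cnt: "card {p. fa p \<noteq> 0} = 2 * card (UNIV::'a set) - 1"
proof -
  let ?q = "card (UNIV::'a set)"
  have "card {p. fa p = 0} = (?q - 1)^2"
    using ccnt curve_eq card_image[OF inj_on_subset[OF gp_inj]] by simp
  moreover have "card {p. fa p = 0} + card {p. fa p \<noteq> 0} = ?q * ?q"
  proof -
    have "(UNIV::('a\<times>'a) set) = {p. fa p = 0} \<union> {p. fa p \<noteq> 0}" by auto
    hence "card (UNIV::('a\<times>'a) set) = card {p. fa p = 0} + card {p. fa p \<noteq> 0}"
      by (simp add: card_Un_disjoint[symmetric] disjoint_iff)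
    moreover have "card (UNIV::('a\<times>'a) set) = ?q * ?q" by (metis UNIV_Times_UNIV card_cartesian_product)
    ultimately show ?thesis by simp
  qed
  ultimately have "card {p. fa p \<noteq> 0} = ?q * ?q - (?q - 1) * (?q - 1)" by (simp add: power2_eq_square)
  moreover obtain r where r: "?q = r + 1" using q7 by (metis add.commute le_add_diff_inverse2 le_trans one_le_numeral)
  ultimately show ?thesis by (simp add: algebra_simps)
qed

lemma AP_fa: "AP fa"
proof
  show "\<And>i j a b. i + j \<le> card (UNIV::'a set) - 2 \<Longrightarrow> (\<Sum>p\<in>UNIV. fa p * aff a p ^ i * aff b p ^ j) = 0"
    by (rule fa_mom)
  show "\<And>d1 d2 s0 t0. (d1, d2) \<noteq> (0, 0) \<Longrightarrow> (\<Sum>t\<in>UNIV. fa (s0 + t * d1, t0 + t * d2)) \<noteq> 0"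
    by (rule fa_lsum)
  show "card {p. fa p \<noteq> 0} = 2 * card (UNIV::'a set) - 1" by (rule fa_cnt)
  show "7 \<le> card (UNIV::'a set)" by (rule q7)
qed

end

lemma two_elems: "finite S \<Longrightarrow> card S \<ge> 2 \<Longrightarrow> \<exists>p p'. p \<in> S \<and> p' \<in> S \<and> p \<noteq> p'"
proof -
  assume fS: "finite S" and c: "card S \<ge> 2"
  hence "S \<noteq> {}" by auto
  then obtain p where p: "p \<in> S" by blast
  have "card (S - {p}) \<ge> 1" using c p fS by simp
  hence "S - {p} \<noteq> {}" by (cases "S - {p} = {}") auto
  then obtain p' where "p' \<in> S - {p}" by blast
  thus ?thesis using p by blast
qed

lemma lf_eq_triple: "(\<And>v. lf m v = lf m' v) \<Longrightarrow> m = (m'::'a::comm_ring_1 v3)"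
proof -
  assume H: "\<And>v. lf m v = lf m' v"
  obtain a b c where m: "m = (a,b,c)" by (cases m)
  obtain a' b' c' where m': "m' = (a',b',c')" by (cases m')
  have "a = a'" using H[of "(1,0,0)"] m m' by simp
  moreover have "b = b'" using H[of "(0,1,0)"] m m' by simp
  moreover have "c = c'" using H[of "(0,0,1)"] m m' by simp
  ultimately show ?thesis using m m' by simp
qed

context PW
begin

lemma Dm_inj: "inj (Dm A B C)"
proof (rule injI)
  fix m m' :: "'a v3" assume h: "Dm A B C m = Dm A B C m'"
  have "lf m v = lf m' v" for v
  proof -
    obtain w where "v = Tm w" using Tm_surj by (metis surj_def)
    thus ?thesis using h by (simp add: lf_Tm)
  qed
  thus "m = m'" by (rule lf_eq_triple)
qed

lemma Dm_surj: "surj (Dm A B C)" by (rule finite_UNIV_inj_surj[OF _ Dm_inj]) simp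

lemma Dm_zero: "Dm A B C (0,0,0) = (0,0,0)" by (cases A, cases B, cases C) (simp add: Dm_def)

lemma lf_Tm1: "lf m (Tm (fst p, snd p, 1)) = aff (Dm A B C m) p"
  by (simp add: lf_Tm aff_def)

lemma no_curve:
  assumes H: "\<And>p. aff (Dm A B C m) p = 0 \<Longrightarrow> fa p \<noteq> 0"
  shows "line_pts m \<inter> curve_pts (card (UNIV::'a set) - 1) F = {}"
proof (rule ccontr)
  assume "line_pts m \<inter> curve_pts (card (UNIV::'a set) - 1) F \<noteq> {}"
  then obtain P where P: "P \<in> line_pts m" "P \<in> curve_pts (card (UNIV::'a set) - 1) F" by blast
  hence "P \<in> proj_pts" using curve_pts_subset by blast
  then obtain v where v: "v \<noteq> (0,0,0)" "P = proj_class v" by (rule proj_pts_E)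
  have hv: "heval (card (UNIV::'a set) - 1) F v = 0" using P v curve_class_iff[OF v(1)] by simp
  have lv: "lf m v = 0" using P v line_class_iff[OF v(1)] by simp
  obtain s t u where w: "v = Tm (s,t,u)" by (rule Tm_decomp)
  have u: "u \<noteq> 0"
  proof
    assume "u = 0"
    hence "lf l0 v = 0" using w by (simp add: lf_l0_Tm)
    hence "P \<in> line_pts l0" using v line_class_iff[OF v(1)] by simp
    thus False using P LZ by (auto simp: Zset_def)
  qed
  have v2: "v = vsc u (Tm (s/u, t/u, 1))" using w Tm_u[OF u] by simp
  have "lf m v = u * aff (Dm A B C m) (s/u, t/u)" using v2 lf_Tm1[of m "(s/u, t/u)"] by (simp add: lf_vsc)
  hence "aff (Dm A B C m) (s/u, t/u) = 0" using lv u by simp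
  hence "fa (s/u, t/u) \<noteq> 0" by (rule H)
  moreover have "heval (card (UNIV::'a set) - 1) F v = u ^ (card (UNIV::'a set) - 1) * fa (s/u, t/u)"
    using v2 heval_Tm1[of "(s/u, t/u)"] by (simp add: heval_vsc)
  ultimately show False using hv u by simp
qed

lemma line_nonzeros:
  assumes "line_pts m \<inter> curve_pts (card (UNIV::'a set) - 1) F = {}" "aff (Dm A B C m) p = 0"
  shows "fa p \<noteq> 0"
proof -
  have "gp p \<in> line_pts m" using line_class_iff[OF gp_nz] lf_Tm1[of m p] assms(2) by simp
  hence "gp p \<notin> curve_pts (card (UNIV::'a set) - 1) F" using assms(1) by blast
  thus ?thesis using curve_class_iff[OF gp_nz] heval_Tm1[of p] by simp
qed

lemma same_line:
  assumes x: "Dm A B C m = (x1,x2,x3)" "(x1,x2) \<noteq> (0,0)"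
    and y: "Dm A B C m' = (y1,y2,y3)" "(y1,y2) \<noteq> (0,0)"
    and c2: "card ({p. aff (x1,x2,x3) p = 0} \<inter> {p. aff (y1,y2,y3) p = 0}) \<ge> 2"
  shows "line_pts m' = line_pts m"
proof -
  obtain p p' where pp: "p \<in> {p. aff (x1,x2,x3) p = 0} \<inter> {p. aff (y1,y2,y3) p = 0}"
    "p' \<in> {p. aff (x1,x2,x3) p = 0} \<inter> {p. aff (y1,y2,y3) p = 0}" "p \<noteq> p'"
    using two_elems[OF _ c2] by auto
  have "\<exists>lam. lam \<noteq> 0 \<and> y1 = lam * x1 \<and> y2 = lam * x2 \<and> y3 = lam * x3"
    using pp by (intro aff_two_points_prop[OF x(2) y(2), where p=p and p'=p']) auto
  then obtain lam where lam: "lam \<noteq> 0" "y1 = lam * x1" "y2 = lam * x2" "y3 = lam * x3" by blast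
  have "Dm A B C m' = Dm A B C (vsc lam m)" using x y lam by (simp add: Dm_vsc)
  hence "m' = vsc lam m" using Dm_inj by (meson injD)
  thus ?thesis using line_pts_vsc[OF lam(1)] by simp
qed

theorem a0_three: "a0 (card (UNIV::'a set) - 1) F = 3"
proof -
  let ?q = "card (UNIV::'a set)"
  let ?cv = "curve_pts (?q - 1) F"
  interpret AP fa by (rule AP_fa)
  obtain b1 b2 b3 g1 g2 g3 where S: "\<forall>p. fa p \<noteq> 0 \<longleftrightarrow> (aff (b1,b2,b3) p = 0 \<or> aff (g1,g2,g3) p = 0)"
    and det: "b1 * g2 - b2 * g1 \<noteq> 0" using two_lines by blast
  have bnz: "(b1,b2) \<noteq> (0,0)" and gnz: "(g1,g2) \<noteq> (0,0)" using det by auto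
  obtain m1 where m1: "Dm A B C m1 = (b1,b2,b3)" using Dm_surj by (metis surj_def)
  obtain m2 where m2: "Dm A B C m2 = (g1,g2,g3)" using Dm_surj by (metis surj_def)
  have m1nz: "m1 \<noteq> (0,0,0)" using m1 bnz Dm_zero by auto
  have m2nz: "m2 \<noteq> (0,0,0)" using m2 gnz Dm_zero by auto
  have l0nz: "l0 \<noteq> (0,0,0)" using l0C by (auto simp: lf_def)
  define L0 where "L0 = line_pts l0"
  define L1 where "L1 = line_pts m1"
  define L2 where "L2 = line_pts m2"
  define LS where "LS = {L \<in> fq_lines. L \<inter> ?cv = {}}"
  have cb: "card {p. aff (b1,b2,b3) p = 0} = ?q" by (rule aff_line_card[OF bnz])
  have cg: "card {p. aff (g1,g2,g3) p = 0} = ?q" by (rule aff_line_card[OF gnz])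
  have "L0 \<in> fq_lines" unfolding fq_lines_def L0_def using l0nz by blast
  moreover have "L0 \<inter> ?cv = {}" using LZ by (auto simp: Zset_def L0_def)
  ultimately have i0: "L0 \<in> LS" unfolding LS_def by blast
  have "L1 \<in> fq_lines" unfolding fq_lines_def L1_def using m1nz by blast
  moreover have "L1 \<inter> ?cv = {}" unfolding L1_def
  proof (rule no_curve)
    fix p assume "aff (Dm A B C m1) p = 0"
    thus "fa p \<noteq> 0" using S[rule_format, of p] m1 by simp
  qed
  ultimately have i1: "L1 \<in> LS" unfolding LS_def by blast
  have "L2 \<in> fq_lines" unfolding fq_lines_def L2_def using m2nz by blast
  moreover have "L2 \<inter> ?cv = {}" unfolding L2_def
  proof (rule no_curve)
    fix p assume "aff (Dm A B C m2) p = 0"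
    thus "fa p \<noteq> 0" using S[rule_format, of p] m2 by simp
  qed
  ultimately have i2: "L2 \<in> LS" unfolding LS_def by blast
  have sub: "LS \<subseteq> {L0, L1, L2}"
  proof
    fix L assume L: "L \<in> LS"
    then obtain m where m: "m \<noteq> (0,0,0)" "L = line_pts m" by (auto simp: LS_def fq_lines_def)
    have Lc: "line_pts m \<inter> ?cv = {}" using L m by (simp add: LS_def)
    obtain x1 x2 x3 where x: "Dm A B C m = (x1,x2,x3)" by (cases "Dm A B C m")
    show "L \<in> {L0, L1, L2}"
    proof (cases "(x1,x2) = (0,0)")
      case True
      have x3: "x3 \<noteq> 0"
      proof
        assume "x3 = 0"
        hence "Dm A B C m = Dm A B C (0,0,0)" using x True Dm_zero by simp
        hence "m = (0,0,0)" using Dm_inj by (meson injD)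
        thus False using m by simp
      qed
      have "lf m v = 0 \<longleftrightarrow> lf l0 v = 0" for v
      proof -
        obtain s t u where w: "v = Tm (s,t,u)" by (rule Tm_decomp)
        have "lf m v = x3 * u" using w x True by (simp add: lf_Tm)
        moreover have "lf l0 v = u" using w by (simp add: lf_l0_Tm)
        ultimately show ?thesis using x3 by simp
      qed
      hence "line_pts m = line_pts l0" by (rule line_pts_eqI)
      thus ?thesis using m by (simp add: L0_def)
    next
      case False
      let ?Z = "{p. aff (x1,x2,x3) p = 0}"
      have cZ: "card ?Z = ?q" by (rule aff_line_card[OF False])
      have "?Z \<subseteq> (?Z \<inter> {p. aff (b1,b2,b3) p = 0}) \<union> (?Z \<inter> {p. aff (g1,g2,g3) p = 0})"
      proof
        fix p assume "p \<in> ?Z"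
        hence "fa p \<noteq> 0" using line_nonzeros[OF Lc] x by simp
        thus "p \<in> (?Z \<inter> {p. aff (b1,b2,b3) p = 0}) \<union> (?Z \<inter> {p. aff (g1,g2,g3) p = 0})"
          using S \<open>p \<in> ?Z\<close> by auto
      qed
      hence "card ?Z \<le> card ((?Z \<inter> {p. aff (b1,b2,b3) p = 0}) \<union> (?Z \<inter> {p. aff (g1,g2,g3) p = 0}))"
        by (intro card_mono) auto
      also have "\<dots> \<le> card (?Z \<inter> {p. aff (b1,b2,b3) p = 0}) + card (?Z \<inter> {p. aff (g1,g2,g3) p = 0})"
        by (rule card_Un_le)
      finally have "card (?Z \<inter> {p. aff (b1,b2,b3) p = 0}) \<ge> 2 \<or> card (?Z \<inter> {p. aff (g1,g2,g3) p = 0}) \<ge> 2"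
        using cZ q7 by linarith
      thus ?thesis
      proof
        assume "card (?Z \<inter> {p. aff (b1,b2,b3) p = 0}) \<ge> 2"
        hence "line_pts m1 = line_pts m" by (rule same_line[OF x False m1 bnz])
        thus ?thesis using m by (simp add: L1_def)
      next
        assume "card (?Z \<inter> {p. aff (g1,g2,g3) p = 0}) \<ge> 2"
        hence "line_pts m2 = line_pts m" by (rule same_line[OF x False m2 gnz])
        thus ?thesis using m by (simp add: L2_def)
      qed
    qed
  qed
  have pt_in: "gp p \<in> line_pts mm \<longleftrightarrow> aff (Dm A B C mm) p = 0" for p mm
    using line_class_iff[OF gp_nz] lf_Tm1[of mm p] by simp
  have nL0: "gp p \<notin> L0" for p
    using line_class_iff[OF gp_nz] lf_l0_Tm by (simp add: L0_def)
  obtain pb where pb: "aff (b1,b2,b3) pb = 0"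
  proof -
    have "card {p. aff (b1,b2,b3) p = 0} > 0" using cb q7 by simp
    hence "{p. aff (b1,b2,b3) p = 0} \<noteq> {}" by (simp add: card_gt_0_iff)
    thus ?thesis using that by blast
  qed
  obtain pg where pg: "aff (g1,g2,g3) pg = 0"
  proof -
    have "card {p. aff (g1,g2,g3) p = 0} > 0" using cg q7 by simp
    hence "{p. aff (g1,g2,g3) p = 0} \<noteq> {}" by (simp add: card_gt_0_iff)
    thus ?thesis using that by blast
  qed
  have d01: "L0 \<noteq> L1" using nL0[of pb] pt_in[of pb m1] pb m1 by (auto simp: L1_def)
  have d02: "L0 \<noteq> L2" using nL0[of pg] pt_in[of pg m2] pg m2 by (auto simp: L2_def)
  have cbg: "card ({p. aff (b1,b2,b3) p = 0} \<inter> {p. aff (g1,g2,g3) p = 0}) \<le> 1"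
  proof (rule ccontr)
    assume "\<not> ?thesis"
    hence "card ({p. aff (b1,b2,b3) p = 0} \<inter> {p. aff (g1,g2,g3) p = 0}) \<ge> 2" by simp
    then obtain p p' where pp: "p \<in> {p. aff (b1,b2,b3) p = 0} \<inter> {p. aff (g1,g2,g3) p = 0}"
      "p' \<in> {p. aff (b1,b2,b3) p = 0} \<inter> {p. aff (g1,g2,g3) p = 0}" "p \<noteq> p'"
      using two_elems[of "{p. aff (b1,b2,b3) p = 0} \<inter> {p. aff (g1,g2,g3) p = 0}"] by auto
    have "\<exists>lam. lam \<noteq> 0 \<and> g1 = lam * b1 \<and> g2 = lam * b2 \<and> g3 = lam * b3"
      using pp by (intro aff_two_points_prop[OF bnz gnz, where p=p and p'=p']) auto
    then obtain lam where lam: "g1 = lam * b1" "g2 = lam * b2" by blast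
    hence "b1 * g2 - b2 * g1 = 0" by (simp add: algebra_simps)
    thus False using det by simp
  qed
  obtain p12 where p12: "aff (b1,b2,b3) p12 = 0" "aff (g1,g2,g3) p12 \<noteq> 0"
  proof -
    have "card ({p. aff (b1,b2,b3) p = 0} - {p. aff (g1,g2,g3) p = 0}) \<ge> ?q - 1"
    proof -
      have "card {p. aff (b1,b2,b3) p = 0} \<le> card ({p. aff (b1,b2,b3) p = 0} - {p. aff (g1,g2,g3) p = 0})
          + card ({p. aff (b1,b2,b3) p = 0} \<inter> {p. aff (g1,g2,g3) p = 0})"
        using card_Un_le[of "{p. aff (b1,b2,b3) p = 0} - {p. aff (g1,g2,g3) p = 0}" "{p. aff (b1,b2,b3) p = 0} \<inter> {p. aff (g1,g2,g3) p = 0}"]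
        by (simp add: Un_Diff_Int)
      thus ?thesis using cb cbg by linarith
    qed
    hence "card ({p. aff (b1,b2,b3) p = 0} - {p. aff (g1,g2,g3) p = 0}) > 0" using q7 by linarith
    hence "{p. aff (b1,b2,b3) p = 0} - {p. aff (g1,g2,g3) p = 0} \<noteq> {}" by (simp add: card_gt_0_iff)
    thus ?thesis using that by blast
  qed
  have d12: "L1 \<noteq> L2" using pt_in[of p12 m1] pt_in[of p12 m2] p12 m1 m2 by (auto simp: L1_def L2_def)
  have "LS = {L0, L1, L2}" using sub i0 i1 i2 by blast
  hence "card LS = 3" using d01 d02 d12 by simp
  thus ?thesis by (simp add: LS_def a0_def)
qed

end

theorem corollary3p12:
  fixes F :: "('a::{finite,field}) tpoly"
  assumes "card (UNIV :: 'a set) \<ge> 7"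
    and "homog (card (UNIV :: 'a set) - 1) F"
    and "no_linear_component (card (UNIV :: 'a set) - 1) F"
    and "card (curve_pts (card (UNIV :: 'a set) - 1) F) = (card (UNIV :: 'a set) - 1)^2"
    and "\<exists>L\<in>fq_lines. L \<subseteq> Zset (card (UNIV :: 'a set) - 1) F"
  shows "a0 (card (UNIV :: 'a set) - 1) F = 3"
proof -
  obtain L where L: "L \<in> fq_lines" "L \<subseteq> Zset (card (UNIV :: 'a set) - 1) F" using assms(5) by blast
  obtain l0 :: "'a v3" where l0: "l0 \<noteq> (0,0,0)" "L = line_pts l0"
    using L(1) unfolding fq_lines_def by blast
  obtain A B C where ABC: "lf l0 A = 0" "lf l0 B = 0" "lf l0 C = 1"
    "\<forall>w. lin3 A B C w = (0,0,0) \<longrightarrow> w = (0,0,0)"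
    using basis_exists[OF l0(1)] by blast
  interpret PW F l0 A B C
  proof
    show "7 \<le> card (UNIV :: 'a set)" by (rule assms(1))
    show "line_pts l0 \<subseteq> Zset (card (UNIV :: 'a set) - 1) F" using L l0 by simp
    show "lf l0 A = 0" "lf l0 B = 0" "lf l0 C = 1" by (rule ABC)+
    show "\<And>w. lin3 A B C w = (0, 0, 0) \<Longrightarrow> w = (0, 0, 0)" using ABC(4) by blast
    show "card (curve_pts (card (UNIV :: 'a set) - 1) F) = (card (UNIV :: 'a set) - 1)^2" by (rule assms(4))
  qed
  show ?thesis by (rule a0_three)
qed

end
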